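(* Let $H$ be a numerical semigroup whose minimal generating set is an arithmetic sequence $a_1<a_2<\dots<a_n$ (i.e. $a_{i+1}-a_i=d$ for a fixed $d$ and all $i$). Then $I_H^*$ is minimally generated by its reduced Gröbner basis with respect to the degree reverse lexicographic order induced by $x_1>x_2>\dots>x_n$.
   Context: A numerical semigroup is a submonoid of $\mathbb{N}$ with finite complement. $K$ is a field, $S=K[x_1,\dots,x_n]$, $I_H=\ker(S\to K[t],\ x_i\mapsto t^{a_i})$. For $0\ne f\in S$, $f^*$ is its homogeneous component of least degree, and $I_H^*=(f^*:0\ne f\in I_H)$. *)

theory Defs
  imports "HOL-Library.Poly_Mapping" "HOL-Computational_Algebra.Polynomial"
begin

(* Multivariate polynomials over a field K: finitely supported maps from
exponent vectors (nat <Rightarrow><^sub>0 nat) to coefficients; the variable x_(i+1) of the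
paper is index i. The ring S = K[x_1,...,x_n] is the set of polynomials whose
monomials only involve the indices 0..n-1. *)

type_synonym 'k mpoly = "(nat \<Rightarrow>\<^sub>0 nat) \<Rightarrow>\<^sub>0 'k"

definition in_S :: "nat \<Rightarrow> 'k::field mpoly \<Rightarrow> bool" where
  "in_S n p \<longleftrightarrow> (\<forall>\<alpha>\<in>Poly_Mapping.keys p. Poly_Mapping.keys \<alpha> \<subseteq> {..<n})"

definition tdeg :: "(nat \<Rightarrow>\<^sub>0 nat) \<Rightarrow> nat" where
  "tdeg \<alpha> = (\<Sum>i\<in>Poly_Mapping.keys \<alpha>. Poly_Mapping.lookup \<alpha> i)"

definition mdvd :: "(nat \<Rightarrow>\<^sub>0 nat) \<Rightarrow> (nat \<Rightarrow>\<^sub>0 nat) \<Rightarrow> bool" where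
  "mdvd \<alpha> \<beta> \<longleftrightarrow> (\<forall>i. Poly_Mapping.lookup \<alpha> i \<le> Poly_Mapping.lookup \<beta> i)"

(* The K-algebra map S <rightarrow> K[t], x_i <mapsto> t^(a_i). *)
definition sg_eval :: "(nat \<Rightarrow> nat) \<Rightarrow> 'k::field mpoly \<Rightarrow> 'k poly" where
  "sg_eval a p = (\<Sum>\<alpha>\<in>Poly_Mapping.keys p.
      monom (Poly_Mapping.lookup p \<alpha>)
            (\<Sum>i\<in>Poly_Mapping.keys \<alpha>. Poly_Mapping.lookup \<alpha> i * a i))"

definition toric_ideal :: "nat \<Rightarrow> (nat \<Rightarrow> nat) \<Rightarrow> 'k::field mpoly set" where
  "toric_ideal n a = {p. in_S n p \<and> sg_eval a p = 0}"

definition ideal_gen :: "nat \<Rightarrow> 'k::field mpoly set \<Rightarrow> 'k mpoly set" where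
  "ideal_gen n G = {p. \<exists>F h. finite F \<and> F \<subseteq> G \<and> (\<forall>g\<in>F. in_S n (h g)) \<and>
                          p = (\<Sum>g\<in>F. h g * g)}"

definition initial_form :: "'k::field mpoly \<Rightarrow> 'k mpoly" where
  "initial_form f =
     (let m = Min (tdeg ` Poly_Mapping.keys f)
      in (\<Sum>\<alpha>\<in>{\<alpha>\<in>Poly_Mapping.keys f. tdeg \<alpha> = m}.
            Poly_Mapping.single \<alpha> (Poly_Mapping.lookup f \<alpha>)))"

definition tangent_cone_ideal :: "nat \<Rightarrow> 'k::field mpoly set \<Rightarrow> 'k mpoly set" where
  "tangent_cone_ideal n I = ideal_gen n {initial_form f | f. f \<in> I \<and> f \<noteq> 0}"

(* Degree reverse lexicographic order with x_1 > x_2 > ... (index 0 > index 1 > ...):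
  drl_less <beta> <alpha> means <beta> < <alpha>: either tdeg <beta> < tdeg <alpha>, or equal degree and at the
  largest index i where they differ, <alpha> has the smaller exponent. *)
definition drl_less :: "(nat \<Rightarrow>\<^sub>0 nat) \<Rightarrow> (nat \<Rightarrow>\<^sub>0 nat) \<Rightarrow> bool" where
  "drl_less \<beta> \<alpha> \<longleftrightarrow> tdeg \<beta> < tdeg \<alpha> \<or>
     (tdeg \<beta> = tdeg \<alpha> \<and> \<alpha> \<noteq> \<beta> \<and>
      (let i = Max {j. Poly_Mapping.lookup \<alpha> j \<noteq> Poly_Mapping.lookup \<beta> j}
       in Poly_Mapping.lookup \<alpha> i < Poly_Mapping.lookup \<beta> i))"

definition lm :: "'k::field mpoly \<Rightarrow> (nat \<Rightarrow>\<^sub>0 nat)" where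
  "lm f = (THE \<alpha>. \<alpha> \<in> Poly_Mapping.keys f \<and>
             (\<forall>\<beta>\<in>Poly_Mapping.keys f. \<beta> \<noteq> \<alpha> \<longrightarrow> drl_less \<beta> \<alpha>))"

definition lc :: "'k::field mpoly \<Rightarrow> 'k" where
  "lc f = Poly_Mapping.lookup f (lm f)"

definition is_groebner_basis :: "'k::field mpoly set \<Rightarrow> 'k mpoly set \<Rightarrow> bool" where
  "is_groebner_basis I G \<longleftrightarrow> finite G \<and> G \<subseteq> I \<and> 0 \<notin> G \<and>
     (\<forall>f\<in>I. f \<noteq> 0 \<longrightarrow> (\<exists>g\<in>G. mdvd (lm g) (lm f)))"

definition is_reduced_groebner_basis :: "'k::field mpoly set \<Rightarrow> 'k mpoly set \<Rightarrow> bool" where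
  "is_reduced_groebner_basis I G \<longleftrightarrow> is_groebner_basis I G \<and>
     (\<forall>g\<in>G. lc g = 1 \<and>
        (\<forall>g'\<in>G. g' \<noteq> g \<longrightarrow> (\<forall>\<alpha>\<in>Poly_Mapping.keys g. \<not> mdvd (lm g') \<alpha>)))"

definition minimally_generates :: "nat \<Rightarrow> 'k::field mpoly set \<Rightarrow> 'k mpoly set \<Rightarrow> bool" where
  "minimally_generates n G I \<longleftrightarrow> ideal_gen n G = I \<and> (\<forall>g\<in>G. ideal_gen n (G - {g}) \<noteq> I)"

definition sg_generated :: "nat set \<Rightarrow> nat set" where
  "sg_generated A = {x. \<exists>c. x = (\<Sum>b\<in>A. c b * b)}"

end

theory Submission
  imports Defs
begin

abbreviation "lk \<equiv> Poly_Mapping.lookup"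
abbreviation "ks \<equiv> Poly_Mapping.keys"
abbreviation "sgl \<equiv> Poly_Mapping.single"

definition wsum :: "(nat \<Rightarrow> nat) \<Rightarrow> (nat \<Rightarrow>\<^sub>0 nat) \<Rightarrow> nat" where
  "wsum f \<alpha> = (\<Sum>i\<in>ks \<alpha>. lk \<alpha> i * f i)"

lemma wsum_add: "wsum f (\<alpha> + \<beta>) = wsum f \<alpha> + wsum f \<beta>"
  unfolding wsum_def by (rule setsum_keys_plus_distrib) (auto simp: algebra_simps)

lemma wsum_single: "wsum f (sgl i k) = k * f i"
  unfolding wsum_def by (cases "k=0") auto

lemma wsum_zero[simp]: "wsum f 0 = 0"
  unfolding wsum_def by simp

lemma wsum_superset: "finite A \<Longrightarrow> ks \<alpha> \<subseteq> A \<Longrightarrow> wsum f \<alpha> = (\<Sum>i\<in>A. lk \<alpha> i * f i)"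
  unfolding wsum_def by (rule sum.mono_neutral_left) (auto simp: in_keys_iff)

lemma tdeg_wsum: "tdeg \<alpha> = wsum (\<lambda>_. 1) \<alpha>"
  unfolding tdeg_def wsum_def by simp

lemma tdeg_add: "tdeg (\<alpha> + \<beta>) = tdeg \<alpha> + tdeg \<beta>"
  by (simp add: tdeg_wsum wsum_add)

lemma tdeg_single: "tdeg (sgl i k) = k"
  by (simp add: tdeg_wsum wsum_single)

lemma tdeg_zero[simp]: "tdeg 0 = 0"
  by (simp add: tdeg_wsum)

lemma tdeg_eq_0: "tdeg \<alpha> = 0 \<longleftrightarrow> \<alpha> = 0"
proof
  assume "tdeg \<alpha> = 0"
  then have "\<forall>i\<in>ks \<alpha>. lk \<alpha> i = 0" unfolding tdeg_def by simp
  then show "\<alpha> = 0" by (metis in_keys_iff keys_eq_empty equals0I)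
qed simp

lemma keys_add_nat: "ks (\<alpha> + \<beta> :: nat \<Rightarrow>\<^sub>0 nat) = ks \<alpha> \<union> ks \<beta>"
  by (auto simp: in_keys_iff lookup_add)

lemma lk_le_tdeg: "lk \<alpha> i \<le> tdeg \<alpha>"
proof (cases "i \<in> ks \<alpha>")
  case True
  then show ?thesis unfolding tdeg_def by (intro member_le_sum) auto
qed (simp add: in_keys_iff)

section \<open>Linear functionals: sums of coefficients over a set of monomials\<close>

definition lsum :: "(nat \<Rightarrow>\<^sub>0 nat) set \<Rightarrow> 'k::field mpoly \<Rightarrow> 'k" where
  "lsum S p = (\<Sum>\<alpha>\<in>ks p \<inter> S. lk p \<alpha>)"

lemma lsum_superset: "finite A \<Longrightarrow> ks p \<subseteq> A \<Longrightarrow> lsum S p = (\<Sum>\<alpha>\<in>A \<inter> S. lk p \<alpha>)"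
  unfolding lsum_def by (rule sum.mono_neutral_left) (auto simp: in_keys_iff)

lemma lsum_add: "lsum S (p + q) = lsum S p + lsum S q"
proof -
  let ?A = "ks p \<union> ks q"
  have f: "finite ?A" by simp
  have "lsum S (p + q) = (\<Sum>\<alpha>\<in>?A \<inter> S. lk (p+q) \<alpha>)"
    by (rule lsum_superset[OF f]) (rule keys_add)
  also have "\<dots> = (\<Sum>\<alpha>\<in>?A \<inter> S. lk p \<alpha>) + (\<Sum>\<alpha>\<in>?A \<inter> S. lk q \<alpha>)"
    by (simp add: lookup_add sum.distrib)
  also have "\<dots> = lsum S p + lsum S q"
    using lsum_superset[OF f, of p S] lsum_superset[OF f, of q S] by auto
  finally show ?thesis .
qed

lemma lsum_zero[simp]: "lsum S 0 = 0"
  unfolding lsum_def by simp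

lemma lsum_sum: "finite F \<Longrightarrow> lsum S (\<Sum>x\<in>F. f x) = (\<Sum>x\<in>F. lsum S (f x))"
  by (induction F rule: finite_induct) (auto simp: lsum_add)

lemma lsum_empty: "ks p \<inter> S = {} \<Longrightarrow> lsum S p = 0"
  unfolding lsum_def by simp

lemma lsum_singleton: "lsum {\<alpha>} p = lk p \<alpha>"
  unfolding lsum_def by (cases "\<alpha> \<in> ks p") (auto simp: in_keys_iff)

lemma poly_expand: "p = (\<Sum>\<alpha>\<in>ks p. sgl \<alpha> (lk p \<alpha>))"
proof (rule poly_mapping_eqI)
  fix \<beta>
  have "lk (\<Sum>\<alpha>\<in>ks p. sgl \<alpha> (lk p \<alpha>)) \<beta> = (\<Sum>\<alpha>\<in>ks p. (if \<beta> = \<alpha> then lk p \<alpha> else 0))"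
    by (simp add: lookup_sum lookup_single when_def eq_commute)
  also have "\<dots> = lk p \<beta>"
    by (simp add: sum.delta in_keys_iff)
  finally show "lk p \<beta> = lk (\<Sum>\<alpha>\<in>ks p. sgl \<alpha> (lk p \<alpha>)) \<beta>" by simp
qed

lemma single_mult_expand:
  "sgl \<gamma> c * q = (\<Sum>\<delta>\<in>ks q. sgl (\<gamma> + \<delta>) (c * lk q \<delta>))"
proof -
  have "sgl \<gamma> c * q = sgl \<gamma> c * (\<Sum>\<delta>\<in>ks q. sgl \<delta> (lk q \<delta>))"
    by (subst poly_expand[of q]) simp
  also have "\<dots> = (\<Sum>\<delta>\<in>ks q. sgl (\<gamma> + \<delta>) (c * lk q \<delta>))"
    by (simp add: sum_distrib_left mult_single)
  finally show ?thesis .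
qed

lemma lookup_single_mult: "lk (sgl (\<gamma>::nat\<Rightarrow>\<^sub>0nat) c * q) (\<gamma> + \<delta>) = c * (lk q \<delta> :: 'k::field)"
proof -
  have "lk (sgl \<gamma> c * q) (\<gamma> + \<delta>) = (\<Sum>\<delta>'\<in>ks q. (if \<gamma> + \<delta>' = \<gamma> + \<delta> then c * lk q \<delta>' else 0))"
    by (subst single_mult_expand) (simp add: lookup_sum lookup_single when_def)
  also have "\<dots> = (\<Sum>\<delta>'\<in>ks q. (if \<delta>' = \<delta> then c * lk q \<delta>' else 0))"
    by (rule sum.cong) (auto dest: add_left_imp_eq)
  also have "\<dots> = c * lk q \<delta>" by (simp add: sum.delta in_keys_iff)
  finally show ?thesis .
qed

lemma keys_single_mult: "ks (sgl \<gamma> c * q) \<subseteq> (\<lambda>\<delta>. \<gamma> + \<delta>) ` ks q"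
proof -
  have "ks (sgl \<gamma> c * q) \<subseteq> (\<Union>\<delta>\<in>ks q. ks (sgl (\<gamma> + \<delta>) (c * lk q \<delta>)))"
    by (subst single_mult_expand) (rule keys_sum)
  then show ?thesis by (auto split: if_splits)
qed

lemma lsum_single_mult:
  "lsum S (sgl \<gamma> c * q) = c * lsum {\<delta>. \<gamma> + \<delta> \<in> S} (q :: 'k::field mpoly)"
proof -
  have f: "finite ((\<lambda>\<delta>. \<gamma> + \<delta>) ` ks q)" by simp
  have "lsum S (sgl \<gamma> c * q) = (\<Sum>\<alpha>\<in>((\<lambda>\<delta>. \<gamma> + \<delta>) ` ks q) \<inter> S. lk (sgl \<gamma> c * q) \<alpha>)"
    by (rule lsum_superset[OF f keys_single_mult])
  also have "((\<lambda>\<delta>. \<gamma> + \<delta>) ` ks q) \<inter> S = (\<lambda>\<delta>. \<gamma> + \<delta>) ` (ks q \<inter> {\<delta>. \<gamma> + \<delta> \<in> S})"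
    by auto
  also have "(\<Sum>\<alpha>\<in>(\<lambda>\<delta>. \<gamma> + \<delta>) ` (ks q \<inter> {\<delta>. \<gamma> + \<delta> \<in> S}). lk (sgl \<gamma> c * q) \<alpha>)
      = (\<Sum>\<delta>\<in>ks q \<inter> {\<delta>. \<gamma> + \<delta> \<in> S}. lk (sgl \<gamma> c * q) (\<gamma> + \<delta>))"
    by (rule sum.reindex_cong[where l="\<lambda>\<delta>. \<gamma> + \<delta>"]) (auto simp: inj_on_def)
  also have "\<dots> = c * lsum {\<delta>. \<gamma> + \<delta> \<in> S} q"
    by (simp add: lookup_single_mult lsum_def sum_distrib_left)
  finally show ?thesis .
qed

lemma lsum_mult:
  "lsum S (h * q) = (\<Sum>\<gamma>\<in>ks h. lk h \<gamma> * lsum {\<delta>. \<gamma> + \<delta> \<in> S} (q :: 'k::field mpoly))"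
proof -
  have e: "(\<Sum>\<gamma>\<in>ks h. sgl \<gamma> (lk h \<gamma>)) = h" by (rule poly_expand[symmetric])
  have "h * q = (\<Sum>\<gamma>\<in>ks h. sgl \<gamma> (lk h \<gamma>)) * q" using e by simp
  also have "\<dots> = (\<Sum>\<gamma>\<in>ks h. sgl \<gamma> (lk h \<gamma>) * q)" by (simp add: sum_distrib_right)
  finally have "lsum S (h * q) = (\<Sum>\<gamma>\<in>ks h. lsum S (sgl \<gamma> (lk h \<gamma>) * q))"
    by (simp add: lsum_sum)
  then show ?thesis by (simp add: lsum_single_mult)
qed


lemma in_S_add: "in_S n p \<Longrightarrow> in_S n q \<Longrightarrow> in_S n (p + q)"
  unfolding in_S_def using keys_add[of p q] by (meson Un_iff subsetD)

lemma in_S_zero[simp]: "in_S n 0"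
  unfolding in_S_def by simp

lemma in_S_sum: "(\<And>x. x \<in> F \<Longrightarrow> in_S n (f x)) \<Longrightarrow> in_S n (\<Sum>x\<in>F. f x)"
  by (induction F rule: infinite_finite_induct) (auto intro: in_S_add)

lemma in_S_mult: "in_S n p \<Longrightarrow> in_S n q \<Longrightarrow> in_S n (p * q)"
  unfolding in_S_def
proof
  fix \<alpha> assume p: "\<forall>\<alpha>\<in>ks p. ks \<alpha> \<subseteq> {..<n}" and q: "\<forall>\<alpha>\<in>ks q. ks \<alpha> \<subseteq> {..<n}"
    and a: "\<alpha> \<in> ks (p * q)"
  from a keys_mult[of p q] obtain \<beta> \<gamma> where "\<alpha> = \<beta> + \<gamma>" "\<beta> \<in> ks p" "\<gamma> \<in> ks q" by blast
  then show "ks \<alpha> \<subseteq> {..<n}" using p q by (simp add: keys_add_nat)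
qed

lemma in_S_single: "ks \<gamma> \<subseteq> {..<n} \<Longrightarrow> in_S n (sgl \<gamma> c)"
  unfolding in_S_def by simp

lemma in_S_one[simp]: "in_S n 1"
  unfolding in_S_def by simp

lemma in_S_keys: "in_S n p \<Longrightarrow> \<alpha> \<in> ks p \<Longrightarrow> ks \<alpha> \<subseteq> {..<n}"
  unfolding in_S_def by blast

definition is_ideal :: "nat \<Rightarrow> 'k::field mpoly set \<Rightarrow> bool" where
  "is_ideal n J \<longleftrightarrow> 0 \<in> J \<and> (\<forall>p\<in>J. \<forall>q\<in>J. p + q \<in> J) \<and> (\<forall>h p. in_S n h \<longrightarrow> p \<in> J \<longrightarrow> h * p \<in> J)"

lemma ideal_gen_mem: "x \<in> X \<Longrightarrow> x \<in> ideal_gen n X"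
  unfolding ideal_gen_def
proof (rule CollectI, intro exI conjI)
  assume "x \<in> X"
  then show "finite {x}" "{x} \<subseteq> X" "\<forall>g\<in>{x}. in_S n ((\<lambda>_. 1) g)" "x = (\<Sum>g\<in>{x}. (\<lambda>_. 1) g * g)"
    by simp_all
qed

lemma ideal_gen_zero: "0 \<in> ideal_gen n X"
  unfolding ideal_gen_def
proof (rule CollectI, intro exI conjI)
  show "finite {}" "{} \<subseteq> X" "\<forall>g\<in>{}. in_S n ((\<lambda>_. 1) g)" "0 = (\<Sum>g\<in>{}. (\<lambda>_. 1) g * g)"
    by simp_all
qed

lemma ideal_gen_add:
  assumes "p \<in> ideal_gen n X" "q \<in> ideal_gen n X"
  shows "p + q \<in> ideal_gen n X"
proof -
  from assms(1) obtain F1 h1 where 1: "finite F1" "F1 \<subseteq> X" "\<forall>g\<in>F1. in_S n (h1 g)" "p = (\<Sum>g\<in>F1. h1 g * g)"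
    unfolding ideal_gen_def by blast
  from assms(2) obtain F2 h2 where 2: "finite F2" "F2 \<subseteq> X" "\<forall>g\<in>F2. in_S n (h2 g)" "q = (\<Sum>g\<in>F2. h2 g * g)"
    unfolding ideal_gen_def by blast
  define h where "h g = (if g \<in> F1 then h1 g else 0) + (if g \<in> F2 then h2 g else 0)" for g
  have hg: "h g * g = (if g \<in> F1 then h1 g * g else 0) + (if g \<in> F2 then h2 g * g else 0)" for g
    unfolding h_def by (simp add: distrib_right)
  have s1: "(\<Sum>g\<in>F1 \<union> F2. (if g \<in> F1 then h1 g * g else 0)) = p"
  proof -
    have fin: "finite (F1 \<union> F2)" using 1 2 by simp
    have "(F1 \<union> F2) \<inter> F1 = F1" by blast
    then show ?thesis using 1 sum.inter_restrict[OF fin, of "\<lambda>g. h1 g * g" F1] by simp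
  qed
  have s2: "(\<Sum>g\<in>F1 \<union> F2. (if g \<in> F2 then h2 g * g else 0)) = q"
  proof -
    have fin: "finite (F1 \<union> F2)" using 1 2 by simp
    have "(F1 \<union> F2) \<inter> F2 = F2" by blast
    then show ?thesis using 2 sum.inter_restrict[OF fin, of "\<lambda>g. h2 g * g" F2] by simp
  qed
  have "(\<Sum>g\<in>F1 \<union> F2. h g * g) = p + q"
    by (simp only: hg sum.distrib s1 s2)
  then have "p + q = (\<Sum>g\<in>F1 \<union> F2. h g * g)" by simp
  moreover have "\<forall>g\<in>F1 \<union> F2. in_S n (h g)"
    using 1 2 unfolding h_def by (auto intro: in_S_add)
  ultimately show ?thesis unfolding ideal_gen_def
    by (intro CollectI exI[of _ "F1 \<union> F2"] exI[of _ h] conjI) (use 1 2 in auto)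
qed

lemma ideal_gen_mult:
  assumes "p \<in> ideal_gen n X" "in_S n h"
  shows "h * p \<in> ideal_gen n X"
proof -
  from assms(1) obtain F h1 where 1: "finite F" "F \<subseteq> X" "\<forall>g\<in>F. in_S n (h1 g)" "p = (\<Sum>g\<in>F. h1 g * g)"
    unfolding ideal_gen_def by blast
  have "h * p = (\<Sum>g\<in>F. (h * h1 g) * g)" using 1 by (simp add: sum_distrib_left mult.assoc)
  moreover have "\<forall>g\<in>F. in_S n (h * h1 g)" using 1 assms(2) by (auto intro: in_S_mult)
  ultimately show ?thesis unfolding ideal_gen_def
    by (intro CollectI exI[of _ F] exI[of _ "\<lambda>g. h * h1 g"] conjI) (use 1 in auto)
qed

lemma ideal_gen_is_ideal: "is_ideal n (ideal_gen n X)"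
  unfolding is_ideal_def using ideal_gen_zero ideal_gen_add ideal_gen_mult by blast

lemma ideal_sum:
  assumes J: "is_ideal n J"
  shows "finite F \<Longrightarrow> (\<And>g. g \<in> F \<Longrightarrow> in_S n (h g) \<and> g \<in> J) \<Longrightarrow> (\<Sum>g\<in>F. h g * g) \<in> J"
proof (induction F rule: finite_induct)
  case empty then show ?case using J by (simp add: is_ideal_def)
next
  case (insert x F)
  then have "h x * x \<in> J" "(\<Sum>g\<in>F. h g * g) \<in> J" using J unfolding is_ideal_def by auto
  then show ?case using insert.hyps J unfolding is_ideal_def by simp
qed

lemma ideal_gen_least: "is_ideal n J \<Longrightarrow> X \<subseteq> J \<Longrightarrow> ideal_gen n X \<subseteq> J"
proof
  fix p assume J: "is_ideal n J" "X \<subseteq> J" and "p \<in> ideal_gen n X"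
  then obtain F h where 1: "finite F" "F \<subseteq> X" "\<forall>g\<in>F. in_S n (h g)" "p = (\<Sum>g\<in>F. h g * g)"
    unfolding ideal_gen_def by blast
  show "p \<in> J" unfolding 1(4) by (rule ideal_sum[OF J(1) 1(1)]) (use 1 J in blast)
qed

lemma ideal_diff:
  assumes "is_ideal n J" "p \<in> J" "q \<in> J" shows "p - q \<in> J"
proof -
  have "in_S n (sgl 0 (-1))" by (rule in_S_single) simp
  then have "sgl 0 (-1) * q \<in> J" using assms unfolding is_ideal_def by blast
  moreover have "sgl 0 (-1) * q = - q"
    by (metis mult_minus_left mult_1 single_one single_uminus)
  ultimately have mq: "- q \<in> J" by simp
  have "p + (- q) \<in> J" using assms mq unfolding is_ideal_def by blast
  then show ?thesis by simp
qed

lemma ideal_gen_in_S: "(\<And>x. x \<in> X \<Longrightarrow> in_S n x) \<Longrightarrow> p \<in> ideal_gen n X \<Longrightarrow> in_S n p"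
proof -
  assume X: "\<And>x. x \<in> X \<Longrightarrow> in_S n x" and "p \<in> ideal_gen n X"
  then obtain F h where 1: "finite F" "F \<subseteq> X" "\<forall>g\<in>F. in_S n (h g)" "p = (\<Sum>g\<in>F. h g * g)"
    unfolding ideal_gen_def by blast
  show "in_S n p" unfolding 1(4) by (rule in_S_sum, rule in_S_mult) (use 1 X in auto)
qed

lemma ideal_gen_lsum_zero:
  assumes "\<And>x \<gamma>. x \<in> X \<Longrightarrow> ks \<gamma> \<subseteq> {..<n} \<Longrightarrow> lsum {\<delta>. \<gamma> + \<delta> \<in> S} x = 0"
    and "p \<in> ideal_gen n X"
  shows "lsum S p = 0"
proof -
  from assms(2) obtain F h where 1: "finite F" "F \<subseteq> X" "\<forall>g\<in>F. in_S n (h g)" "p = (\<Sum>g\<in>F. h g * g)"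
    unfolding ideal_gen_def by blast
  have "lsum S p = (\<Sum>g\<in>F. \<Sum>\<gamma>\<in>ks (h g). lk (h g) \<gamma> * lsum {\<delta>. \<gamma> + \<delta> \<in> S} g)"
    using 1 by (simp add: lsum_sum lsum_mult)
  also have "\<dots> = 0"
    using 1 assms(1) by (intro sum.neutral ballI) (auto simp: in_S_def)
  finally show ?thesis .
qed


section \<open>The degree reverse lexicographic order\<close>

definition rl :: "(nat \<Rightarrow>\<^sub>0 nat) \<Rightarrow> (nat \<Rightarrow>\<^sub>0 nat) \<Rightarrow> bool" where
  "rl \<beta> \<alpha> \<longleftrightarrow> (\<exists>i. lk \<alpha> i < lk \<beta> i \<and> (\<forall>j>i. lk \<alpha> j = lk \<beta> j))"

lemma dset_finite: "finite {j. lk \<alpha> j \<noteq> lk (\<beta>::nat\<Rightarrow>\<^sub>0nat) j}"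
proof (rule finite_subset)
  show "{j. lk \<alpha> j \<noteq> lk \<beta> j} \<subseteq> ks \<alpha> \<union> ks \<beta>"
  proof
    fix j assume "j \<in> {j. lk \<alpha> j \<noteq> lk \<beta> j}"
    then have "lk \<alpha> j \<noteq> 0 \<or> lk \<beta> j \<noteq> 0" by auto
    then show "j \<in> ks \<alpha> \<union> ks \<beta>" by (simp add: in_keys_iff)
  qed
  show "finite (ks \<alpha> \<union> ks \<beta>)" by simp
qed

lemma dset_max:
  fixes \<alpha> \<beta> :: "nat \<Rightarrow>\<^sub>0 nat"
  assumes "\<alpha> \<noteq> \<beta>"
  defines "i \<equiv> Max {j. lk \<alpha> j \<noteq> lk \<beta> j}"
  shows "lk \<alpha> i \<noteq> lk \<beta> i" "\<And>j. j > i \<Longrightarrow> lk \<alpha> j = lk \<beta> j"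
proof -
  let ?D = "{j. lk \<alpha> j \<noteq> lk \<beta> j}"
  have fin: "finite ?D" by (rule dset_finite)
  have ne: "?D \<noteq> {}"
  proof
    assume "?D = {}"
    then have "\<forall>j. lk \<alpha> j = lk \<beta> j" by blast
    then have "\<alpha> = \<beta>" by (simp add: poly_mapping_eqI)
    then show False using assms(1) by simp
  qed
  have "i \<in> ?D" unfolding i_def using fin ne by (rule Max_in)
  then show "lk \<alpha> i \<noteq> lk \<beta> i" by simp
  fix j assume j: "j > i"
  show "lk \<alpha> j = lk \<beta> j"
  proof (rule ccontr)
    assume "lk \<alpha> j \<noteq> lk \<beta> j"
    then have "j \<in> ?D" by simp
    then have "j \<le> i" unfolding i_def using fin by (rule Max_ge[rotated])
    then show False using j by simp
  qed
qed

lemma rl_max: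
  assumes "\<alpha> \<noteq> \<beta>"
  shows "rl \<beta> \<alpha> \<longleftrightarrow> lk \<alpha> (Max {j. lk \<alpha> j \<noteq> lk \<beta> j}) < lk \<beta> (Max {j. lk \<alpha> j \<noteq> lk \<beta> j})"
proof -
  define i where "i = Max {j. lk \<alpha> j \<noteq> lk \<beta> j}"
  have i1: "lk \<alpha> i \<noteq> lk \<beta> i" and i2: "\<And>j. j > i \<Longrightarrow> lk \<alpha> j = lk \<beta> j"
    using dset_max[OF assms] unfolding i_def by blast+
  have "rl \<beta> \<alpha> \<longleftrightarrow> lk \<alpha> i < lk \<beta> i"
  proof
    assume "rl \<beta> \<alpha>"
    then obtain k where k1: "lk \<alpha> k < lk \<beta> k" and k2: "\<forall>j>k. lk \<alpha> j = lk \<beta> j" unfolding rl_def by blast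
    have "k = i"
    proof (rule ccontr)
      assume "k \<noteq> i"
      then have "k < i \<or> i < k" by arith
      then show False
      proof
        assume "k < i" then have "lk \<alpha> i = lk \<beta> i" using k2 by simp
        then show False using i1 by simp
      next
        assume "i < k" then have "lk \<alpha> k = lk \<beta> k" using i2 by simp
        then show False using k1 by simp
      qed
    qed
    then show "lk \<alpha> i < lk \<beta> i" using k1 by simp
  next
    assume "lk \<alpha> i < lk \<beta> i"
    then show "rl \<beta> \<alpha>" unfolding rl_def using i2 by blast
  qed
  then show ?thesis unfolding i_def .
qed

lemma drl_less_rl: "drl_less \<beta> \<alpha> \<longleftrightarrow> tdeg \<beta> < tdeg \<alpha> \<or> (tdeg \<beta> = tdeg \<alpha> \<and> rl \<beta> \<alpha>)"
proof (cases "\<alpha> = \<beta>")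
  case True
  have "\<not> rl \<alpha> \<alpha>" unfolding rl_def by simp
  then show ?thesis unfolding drl_less_def using True by simp
next
  case False
  show ?thesis unfolding drl_less_def Let_def rl_max[OF False] using False by simp
qed

lemma rl_irrefl: "\<not> rl \<alpha> \<alpha>"
  unfolding rl_def by simp

lemma rl_trans:
  assumes "rl \<gamma> \<beta>" "rl \<beta> \<alpha>" shows "rl \<gamma> \<alpha>"
proof -
  obtain i1 where i1: "lk \<alpha> i1 < lk \<beta> i1" "\<forall>j>i1. lk \<alpha> j = lk \<beta> j" using assms(2) unfolding rl_def by blast
  obtain i2 where i2: "lk \<beta> i2 < lk \<gamma> i2" "\<forall>j>i2. lk \<beta> j = lk \<gamma> j" using assms(1) unfolding rl_def by blast
  show ?thesis unfolding rl_def
  proof (intro exI conjI allI impI)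
    show "lk \<alpha> (max i1 i2) < lk \<gamma> (max i1 i2)"
    proof (cases i1 i2 rule: linorder_cases)
      case less
      then have "max i1 i2 = i2" "lk \<alpha> i2 = lk \<beta> i2" using i1(2) by simp_all
      then show ?thesis using i2(1) by simp
    next
      case equal
      then show ?thesis using i1(1) i2(1) by simp
    next
      case greater
      then have "max i1 i2 = i1" "lk \<beta> i1 = lk \<gamma> i1" using i2(2) by simp_all
      then show ?thesis using i1(1) by simp
    qed
    fix j assume "max i1 i2 < j"
    then show "lk \<alpha> j = lk \<gamma> j" using i1 i2 by simp
  qed
qed

lemma rl_total: "\<alpha> \<noteq> \<beta> \<Longrightarrow> rl \<alpha> \<beta> \<or> rl \<beta> \<alpha>"
proof -
  assume ne: "\<alpha> \<noteq> \<beta>"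
  define i where "i = Max {j. lk \<alpha> j \<noteq> lk \<beta> j}"
  have i1: "lk \<alpha> i \<noteq> lk \<beta> i" and i2: "\<And>j. j > i \<Longrightarrow> lk \<alpha> j = lk \<beta> j"
    using dset_max[OF ne] unfolding i_def by blast+
  show ?thesis
  proof (cases "lk \<alpha> i < lk \<beta> i")
    case True then show ?thesis unfolding rl_def using i2 by blast
  next
    case False
    then have "lk \<beta> i < lk \<alpha> i" using i1 by simp
    moreover have "\<forall>j>i. lk \<beta> j = lk \<alpha> j" using i2 by simp
    ultimately show ?thesis unfolding rl_def by blast
  qed
qed

lemma rl_add: "rl (\<beta> + \<gamma>) (\<alpha> + \<gamma>) \<longleftrightarrow> rl \<beta> \<alpha>"
  unfolding rl_def by (simp add: lookup_add)

lemma drl_irrefl: "\<not> drl_less \<alpha> \<alpha>"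
  by (simp add: drl_less_rl rl_irrefl)

lemma drl_trans: "drl_less \<gamma> \<beta> \<Longrightarrow> drl_less \<beta> \<alpha> \<Longrightarrow> drl_less \<gamma> \<alpha>"
proof -
  assume 1: "drl_less \<gamma> \<beta>" and 2: "drl_less \<beta> \<alpha>"
  have d1: "tdeg \<gamma> < tdeg \<beta> \<or> (tdeg \<gamma> = tdeg \<beta> \<and> rl \<gamma> \<beta>)" using 1 by (simp only: drl_less_rl)
  have d2: "tdeg \<beta> < tdeg \<alpha> \<or> (tdeg \<beta> = tdeg \<alpha> \<and> rl \<beta> \<alpha>)" using 2 by (simp only: drl_less_rl)
  show ?thesis
  proof (cases "tdeg \<gamma> = tdeg \<beta> \<and> tdeg \<beta> = tdeg \<alpha>")
    case True
    then have "rl \<gamma> \<beta>" "rl \<beta> \<alpha>" using d1 d2 by simp_all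
    then have "rl \<gamma> \<alpha>" by (rule rl_trans)
    then show ?thesis using True by (simp add: drl_less_rl)
  next
    case False
    then have "tdeg \<gamma> < tdeg \<alpha>" using d1 d2 by linarith
    then show ?thesis by (simp add: drl_less_rl)
  qed
qed

lemma drl_total: "\<alpha> \<noteq> \<beta> \<Longrightarrow> drl_less \<alpha> \<beta> \<or> drl_less \<beta> \<alpha>"
proof -
  assume ne: "\<alpha> \<noteq> \<beta>"
  show ?thesis
  proof (cases "tdeg \<alpha> = tdeg \<beta>")
    case True
    then show ?thesis using rl_total[OF ne] by (simp add: drl_less_rl)
  next
    case False
    then have "tdeg \<alpha> < tdeg \<beta> \<or> tdeg \<beta> < tdeg \<alpha>" by arith
    then show ?thesis by (auto simp: drl_less_rl)
  qed
qed

lemma drl_asym: "drl_less \<beta> \<alpha> \<Longrightarrow> \<not> drl_less \<alpha> \<beta>"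
proof
  assume "drl_less \<beta> \<alpha>" "drl_less \<alpha> \<beta>"
  then have "drl_less \<beta> \<beta>" by (rule drl_trans)
  then show False using drl_irrefl by simp
qed

lemma drl_add: "drl_less \<beta> \<alpha> \<Longrightarrow> drl_less (\<beta> + \<gamma>) (\<alpha> + \<gamma>)"
  unfolding drl_less_rl by (auto simp: tdeg_add rl_add)

lemma drl_add_left: "drl_less \<beta> \<alpha> \<Longrightarrow> drl_less (\<gamma> + \<beta>) (\<gamma> + \<alpha>)"
  using drl_add[of \<beta> \<alpha> \<gamma>] by (simp add: add.commute)

lemma drl_tdeg: "drl_less \<beta> \<alpha> \<Longrightarrow> tdeg \<beta> \<le> tdeg \<alpha>"
  unfolding drl_less_rl by auto

definition is_max :: "(nat \<Rightarrow>\<^sub>0 nat) set \<Rightarrow> (nat \<Rightarrow>\<^sub>0 nat) \<Rightarrow> bool" where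
  "is_max A \<alpha> \<longleftrightarrow> \<alpha> \<in> A \<and> (\<forall>\<beta>\<in>A. \<beta> \<noteq> \<alpha> \<longrightarrow> drl_less \<beta> \<alpha>)"

lemma max_exists: "finite A \<Longrightarrow> A \<noteq> {} \<Longrightarrow> \<exists>\<alpha>. is_max A \<alpha>"
proof (induction A rule: finite_ne_induct)
  case (singleton x) then show ?case unfolding is_max_def by auto
next
  case (insert x F)
  then obtain \<alpha> where a: "is_max F \<alpha>" by blast
  show ?case
  proof (cases "drl_less x \<alpha>")
    case True then show ?thesis using a unfolding is_max_def by auto
  next
    case False
    have "x \<noteq> \<alpha>" using a insert.hyps unfolding is_max_def by auto
    then have xa: "drl_less \<alpha> x" using drl_total False by blast
    have "is_max (insert x F) x" unfolding is_max_def
    proof (intro conjI ballI impI)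
      show "x \<in> insert x F" by simp
      fix \<beta> assume b: "\<beta> \<in> insert x F" "\<beta> \<noteq> x"
      then have bF: "\<beta> \<in> F" by simp
      show "drl_less \<beta> x"
      proof (cases "\<beta> = \<alpha>")
        case True then show ?thesis using xa by simp
      next
        case False
        then have "drl_less \<beta> \<alpha>" using a bF unfolding is_max_def by blast
        then show ?thesis using xa by (rule drl_trans)
      qed
    qed
    then show ?thesis by blast
  qed
qed

lemma max_unique: "is_max A \<alpha> \<Longrightarrow> is_max A \<beta> \<Longrightarrow> \<alpha> = \<beta>"
proof (rule ccontr)
  assume a: "is_max A \<alpha>" and b: "is_max A \<beta>" and ne: "\<alpha> \<noteq> \<beta>"
  have aa: "\<alpha> \<in> A" "\<forall>\<gamma>\<in>A. \<gamma> \<noteq> \<alpha> \<longrightarrow> drl_less \<gamma> \<alpha>" using a unfolding is_max_def by simp_all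
  have bb: "\<beta> \<in> A" "\<forall>\<gamma>\<in>A. \<gamma> \<noteq> \<beta> \<longrightarrow> drl_less \<gamma> \<beta>" using b unfolding is_max_def by simp_all
  have "drl_less \<beta> \<alpha>" using aa(2) bb(1) ne by simp
  moreover have "drl_less \<alpha> \<beta>" using bb(2) aa(1) ne by simp
  ultimately show False using drl_asym by blast
qed

lemma lm_is_max: "f \<noteq> 0 \<Longrightarrow> is_max (ks f) (lm f)"
proof -
  assume "f \<noteq> 0"
  then obtain \<alpha> where a: "is_max (ks f) \<alpha>" using max_exists[of "ks f"] by auto
  have "lm f = \<alpha>" unfolding lm_def
  proof (rule the_equality)
    show "\<alpha> \<in> ks f \<and> (\<forall>\<beta>\<in>ks f. \<beta> \<noteq> \<alpha> \<longrightarrow> drl_less \<beta> \<alpha>)" using a unfolding is_max_def .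
    fix \<alpha>' assume "\<alpha>' \<in> ks f \<and> (\<forall>\<beta>\<in>ks f. \<beta> \<noteq> \<alpha>' \<longrightarrow> drl_less \<beta> \<alpha>')"
    then have "is_max (ks f) \<alpha>'" unfolding is_max_def .
    then show "\<alpha>' = \<alpha>" using a by (rule max_unique)
  qed
  then show ?thesis using a by simp
qed

lemma lm_in_keys: "f \<noteq> 0 \<Longrightarrow> lm f \<in> ks f"
  using lm_is_max unfolding is_max_def by blast

lemma lm_greater: "f \<noteq> 0 \<Longrightarrow> \<beta> \<in> ks f \<Longrightarrow> \<beta> \<noteq> lm f \<Longrightarrow> drl_less \<beta> (lm f)"
  using lm_is_max unfolding is_max_def by blast

lemma lm_eqI: "\<alpha> \<in> ks f \<Longrightarrow> (\<And>\<beta>. \<beta> \<in> ks f \<Longrightarrow> \<beta> \<noteq> \<alpha> \<Longrightarrow> drl_less \<beta> \<alpha>) \<Longrightarrow> lm f = \<alpha>"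
proof -
  assume "\<alpha> \<in> ks f" "\<And>\<beta>. \<beta> \<in> ks f \<Longrightarrow> \<beta> \<noteq> \<alpha> \<Longrightarrow> drl_less \<beta> \<alpha>"
  then have a: "is_max (ks f) \<alpha>" unfolding is_max_def by blast
  then have "f \<noteq> 0" unfolding is_max_def by auto
  then show "lm f = \<alpha>" using lm_is_max a max_unique by blast
qed

lemma keys_tdeg_le_lm: "\<beta> \<in> ks f \<Longrightarrow> tdeg \<beta> \<le> tdeg (lm f)"
proof -
  assume b: "\<beta> \<in> ks f"
  then have "f \<noteq> 0" by auto
  show ?thesis
  proof (cases "\<beta> = lm f")
    case False
    then have "drl_less \<beta> (lm f)" using lm_greater[of f \<beta>] b \<open>f \<noteq> 0\<close> by simp
    then show ?thesis by (rule drl_tdeg)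
  qed simp
qed

section \<open>Well-foundedness on S\<close>

definition drlR :: "nat \<Rightarrow> ((nat \<Rightarrow>\<^sub>0 nat) \<times> (nat \<Rightarrow>\<^sub>0 nat)) set" where
  "drlR n = {p. drl_less (fst p) (snd p) \<and> ks (fst p) \<subseteq> {..<n} \<and> ks (snd p) \<subseteq> {..<n}}"

lemma drlR_iff: "(\<beta>, \<alpha>) \<in> drlR n \<longleftrightarrow> drl_less \<beta> \<alpha> \<and> ks \<beta> \<subseteq> {..<n} \<and> ks \<alpha> \<subseteq> {..<n}"
  unfolding drlR_def by simp

lemma finite_bounded_monomials: "finite {\<beta>. ks \<beta> \<subseteq> {..<n} \<and> tdeg \<beta> \<le> D}"
proof -
  define M where "M = {\<beta>. ks \<beta> \<subseteq> {..<n} \<and> tdeg \<beta> \<le> D}"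
  define L where "L = {xs. set xs \<subseteq> {..D} \<and> length xs = n}"
  define f where "f \<beta> = map (lk \<beta>) [0..<n]" for \<beta> :: "nat \<Rightarrow>\<^sub>0 nat"
  have inj: "inj_on f M"
  proof (rule inj_onI)
    fix \<alpha> \<beta> assume a1: "\<alpha> \<in> M" and a2: "\<beta> \<in> M" and a3: "f \<alpha> = f \<beta>"
    show "\<alpha> = \<beta>"
    proof (rule poly_mapping_eqI)
      fix i show "lk \<alpha> i = lk \<beta> i"
      proof (cases "i < n")
        case True
        have "f \<alpha> ! i = f \<beta> ! i" using a3 by simp
        then show ?thesis using True unfolding f_def by simp
      next
        case False
        then have "i \<notin> ks \<alpha>" using a1 unfolding M_def by auto
        moreover have "i \<notin> ks \<beta>" using a2 False unfolding M_def by auto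
        ultimately show ?thesis by (simp add: in_keys_iff)
      qed
    qed
  qed
  have sub: "f ` M \<subseteq> L"
  proof
    fix xs assume "xs \<in> f ` M"
    then obtain \<beta> where b1: "\<beta> \<in> M" and b2: "xs = f \<beta>" by blast
    have "lk \<beta> i \<le> D" for i using b1 lk_le_tdeg[of \<beta> i] unfolding M_def by simp
    then show "xs \<in> L" unfolding b2 L_def f_def by auto
  qed
  have "finite L" unfolding L_def by (rule finite_lists_length_eq) simp
  then have "finite (f ` M)" using sub by (rule finite_subset[rotated])
  then have "finite M" using inj by (rule finite_imageD)
  then show ?thesis unfolding M_def .
qed

lemma wf_drlR: "wf (drlR n)"
proof -
  define P where "P \<alpha> = {\<beta>. (\<beta>, \<alpha>) \<in> drlR n}" for \<alpha>
  have fin: "finite (P \<alpha>)" for \<alpha>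
  proof (rule finite_subset)
    show "finite {\<beta>. ks \<beta> \<subseteq> {..<n} \<and> tdeg \<beta> \<le> tdeg \<alpha>}" by (rule finite_bounded_monomials)
    show "P \<alpha> \<subseteq> {\<beta>. ks \<beta> \<subseteq> {..<n} \<and> tdeg \<beta> \<le> tdeg \<alpha>}"
    proof
      fix \<beta> assume "\<beta> \<in> P \<alpha>"
      then have "drl_less \<beta> \<alpha>" "ks \<beta> \<subseteq> {..<n}" unfolding P_def drlR_iff by simp_all
      then show "\<beta> \<in> {\<beta>. ks \<beta> \<subseteq> {..<n} \<and> tdeg \<beta> \<le> tdeg \<alpha>}" using drl_tdeg by simp
    qed
  qed
  have "drlR n \<subseteq> measure (\<lambda>\<alpha>. card (P \<alpha>))"
  proof
    fix x assume x: "x \<in> drlR n"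
    obtain \<beta> \<alpha> where xe: "x = (\<beta>, \<alpha>)" by (cases x)
    have ba: "drl_less \<beta> \<alpha>" "ks \<beta> \<subseteq> {..<n}" "ks \<alpha> \<subseteq> {..<n}" using x unfolding xe drlR_iff by simp_all
    have sub: "P \<beta> \<subseteq> P \<alpha>"
    proof
      fix \<gamma> assume "\<gamma> \<in> P \<beta>"
      then have "drl_less \<gamma> \<beta>" "ks \<gamma> \<subseteq> {..<n}" unfolding P_def drlR_iff by simp_all
      then show "\<gamma> \<in> P \<alpha>" using ba drl_trans[of \<gamma> \<beta> \<alpha>] unfolding P_def drlR_iff by simp
    qed
    have "\<beta> \<in> P \<alpha>" using ba unfolding P_def drlR_iff by simp
    moreover have "\<beta> \<notin> P \<beta>" using drl_irrefl[of \<beta>] unfolding P_def drlR_iff by simp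
    ultimately have "P \<beta> \<subset> P \<alpha>" using sub by blast
    then have "card (P \<beta>) < card (P \<alpha>)" using fin[of \<alpha>] by (simp add: psubset_card_mono)
    then show "x \<in> measure (\<lambda>\<alpha>. card (P \<alpha>))" using xe by simp
  qed
  then show ?thesis by (rule wf_subset[OF wf_measure])
qed


section \<open>Generation: a Groebner basis generates the ideal\<close>

lemma mdvd_add: "mdvd \<beta> \<alpha> \<Longrightarrow> (\<alpha> - \<beta>) + \<beta> = \<alpha>"
  unfolding mdvd_def by (intro poly_mapping_eqI) (simp add: lookup_add lookup_minus)

lemma keys_minus_sub: "ks ((\<alpha>::nat\<Rightarrow>\<^sub>0nat) - \<beta>) \<subseteq> ks \<alpha>"
  by (auto simp: in_keys_iff lookup_minus)

lemma lc_lm: "lc g = lk g (lm g)"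
  unfolding lc_def ..

lemma groebner_generates:
  assumes I: "is_ideal n I" and IS: "\<And>p. p \<in> I \<Longrightarrow> in_S n p"
    and gb: "is_groebner_basis I G" and lc1: "\<And>g. g \<in> G \<Longrightarrow> lc g = 1"
  shows "ideal_gen n G = I"
proof
  have GI: "G \<subseteq> I" and G0: "0 \<notin> G"
    and GB: "\<And>f. f \<in> I \<Longrightarrow> f \<noteq> 0 \<Longrightarrow> \<exists>g\<in>G. mdvd (lm g) (lm f)"
    using gb unfolding is_groebner_basis_def by blast+
  show "ideal_gen n G \<subseteq> I" using ideal_gen_least[OF I GI] .
  have main: "\<forall>f. f \<in> I \<longrightarrow> f \<noteq> 0 \<longrightarrow> lm f = \<mu> \<longrightarrow> f \<in> ideal_gen n G" for \<mu>
  proof (induction \<mu> rule: wf_induct[OF wf_drlR[of n]])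
    case (1 \<mu>)
    show ?case
    proof (intro allI impI)
      fix f assume fI: "f \<in> I" and f0: "f \<noteq> 0" and lmf: "lm f = \<mu>"
      obtain g where gG: "g \<in> G" and dv: "mdvd (lm g) \<mu>" using GB[OF fI f0] lmf by blast
      have g0: "g \<noteq> 0" using gG G0 by auto
      have gI: "g \<in> I" using gG GI by auto
      define \<gamma> where "\<gamma> = \<mu> - lm g"
      have \<mu>e: "\<gamma> + lm g = \<mu>" unfolding \<gamma>_def by (rule mdvd_add[OF dv])
      have \<mu>k: "\<mu> \<in> ks f" using lm_in_keys[OF f0] lmf by simp
      have \<mu>S: "ks \<mu> \<subseteq> {..<n}" using IS[OF fI] \<mu>k by (rule in_S_keys)
      have \<gamma>S: "ks \<gamma> \<subseteq> {..<n}" using \<mu>S keys_minus_sub[of \<mu> "lm g"] unfolding \<gamma>_def by blast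
      define c where "c = lk f \<mu>"
      define q where "q = sgl \<gamma> c * g"
      define f' where "f' = f - q"
      have qS: "in_S n (sgl \<gamma> c)" by (rule in_S_single[OF \<gamma>S])
      have qI: "q \<in> I" using I qS gI unfolding q_def is_ideal_def by blast
      have f'I: "f' \<in> I" unfolding f'_def by (rule ideal_diff[OF I fI qI])
      have qG: "q \<in> ideal_gen n G" unfolding q_def by (rule ideal_gen_mult[OF ideal_gen_mem[OF gG] qS])
      have fe: "f = f' + q" unfolding f'_def by simp
      show "f \<in> ideal_gen n G"
      proof (cases "f' = 0")
        case True then show ?thesis using fe qG by simp
      next
        case False
        have lkq: "lk q \<mu> = c" 
          using lookup_single_mult[of \<gamma> c g "lm g"] lc1[OF gG] \<mu>e unfolding q_def lc_lm by simp
        have lkf'\<mu>: "lk f' \<mu> = 0" unfolding f'_def by (simp add: lookup_minus lkq c_def)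
        define \<mu>' where "\<mu>' = lm f'"
        have \<mu>'k: "\<mu>' \<in> ks f'" using lm_in_keys[OF False] unfolding \<mu>'_def .
        have ne: "\<mu>' \<noteq> \<mu>" using \<mu>'k lkf'\<mu> by (auto simp: in_keys_iff)
        have "\<mu>' \<in> ks f \<union> ks q" using \<mu>'k keys_diff[of f q] unfolding f'_def by blast
        then have less: "drl_less \<mu>' \<mu>"
        proof
          assume "\<mu>' \<in> ks f"
          then show ?thesis using lm_greater[OF f0, of \<mu>'] ne lmf by simp
        next
          assume "\<mu>' \<in> ks q"
          then obtain \<beta> where b: "\<beta> \<in> ks g" "\<mu>' = \<gamma> + \<beta>"
            using keys_single_mult[of \<gamma> c g] unfolding q_def by blast
          have "\<beta> \<noteq> lm g" using b ne \<mu>e by auto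
          then have "drl_less \<beta> (lm g)" using lm_greater[OF g0 b(1)] by simp
          then have "drl_less (\<gamma> + \<beta>) (\<gamma> + lm g)" by (rule drl_add_left)
          then show ?thesis using b \<mu>e by simp
        qed
        have \<mu>'S: "ks \<mu>' \<subseteq> {..<n}" using IS[OF f'I] \<mu>'k by (rule in_S_keys)
        have "(\<mu>', \<mu>) \<in> drlR n" using less \<mu>'S \<mu>S by (simp add: drlR_iff)
        then have "f' \<in> ideal_gen n G" using "1.IH" f'I False \<mu>'_def by blast
        then show ?thesis using fe qG ideal_gen_add by metis
      qed
    qed
  qed
  show "I \<subseteq> ideal_gen n G"
  proof
    fix f assume fI: "f \<in> I"
    show "f \<in> ideal_gen n G"
    proof (cases "f = 0")
      case True then show ?thesis by (simp add: ideal_gen_zero)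
    next
      case False then show ?thesis using main fI by blast
    qed
  qed
qed


lemma lsum_single: "lsum S (sgl \<alpha> c) = (if \<alpha> \<in> S then c else 0)"
  unfolding lsum_def by (cases "c = 0") auto

lemma coeff_sg_eval: "coeff (sg_eval a p) k = lsum {\<alpha>. wsum a \<alpha> = k} p"
proof -
  have "coeff (sg_eval a p) k = (\<Sum>\<alpha>\<in>ks p. (if wsum a \<alpha> = k then lk p \<alpha> else 0))"
    unfolding sg_eval_def wsum_def by (simp add: coeff_sum coeff_monom)
  also have "\<dots> = (\<Sum>\<alpha>\<in>ks p \<inter> {\<alpha>. wsum a \<alpha> = k}. lk p \<alpha>)"
    by (simp add: sum.inter_restrict)
  finally show ?thesis unfolding lsum_def .
qed

lemma sg_eval_zero_iff: "sg_eval a p = 0 \<longleftrightarrow> (\<forall>k. lsum {\<alpha>. wsum a \<alpha> = k} p = 0)"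
  by (metis coeff_sg_eval coeff_0 poly_eqI)

lemma lookup_initial_form:
  "lk (initial_form f) \<beta> = (if tdeg \<beta> = Min (tdeg ` ks f) then lk f \<beta> else 0)"
proof -
  define m where "m = Min (tdeg ` ks f)"
  define A where "A = {\<alpha>\<in>ks f. tdeg \<alpha> = m}"
  have "initial_form f = (\<Sum>\<alpha>\<in>A. sgl \<alpha> (lk f \<alpha>))"
    unfolding initial_form_def Let_def m_def A_def ..
  then have "lk (initial_form f) \<beta> = (\<Sum>\<alpha>\<in>A. (if \<beta> = \<alpha> then lk f \<alpha> else 0))"
    by (simp add: lookup_sum lookup_single when_def eq_commute)
  also have "\<dots> = (if \<beta> \<in> A then lk f \<beta> else 0)"
    by (simp add: sum.delta A_def)
  also have "\<dots> = (if tdeg \<beta> = m then lk f \<beta> else 0)"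
    unfolding A_def by (auto simp: in_keys_iff)
  finally show ?thesis unfolding m_def .
qed

lemma keys_initial_form: "ks (initial_form f) \<subseteq> ks f"
  by (auto simp: in_keys_iff lookup_initial_form split: if_splits)

lemma keys_initial_form_tdeg: "\<beta> \<in> ks (initial_form f) \<Longrightarrow> tdeg \<beta> = Min (tdeg ` ks f)"
  by (auto simp: in_keys_iff lookup_initial_form split: if_splits)

abbreviation TC :: "nat \<Rightarrow> (nat \<Rightarrow> nat) \<Rightarrow> 'k::field mpoly set" where
  "TC n a \<equiv> tangent_cone_ideal n (toric_ideal n a)"

abbreviation TCgens :: "nat \<Rightarrow> (nat \<Rightarrow> nat) \<Rightarrow> 'k::field mpoly set" where
  "TCgens n a \<equiv> {initial_form f | f. f \<in> toric_ideal n a \<and> f \<noteq> 0}"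

lemma TC_is_ideal: "is_ideal n (TC n a)"
  unfolding tangent_cone_ideal_def by (rule ideal_gen_is_ideal)

lemma TCgens_in_S: "x \<in> TCgens n a \<Longrightarrow> in_S n x"
  unfolding toric_ideal_def in_S_def using keys_initial_form by blast

lemma TC_in_S: "p \<in> TC n a \<Longrightarrow> in_S n p"
  unfolding tangent_cone_ideal_def by (rule ideal_gen_in_S[OF TCgens_in_S])

lemma TCgens_sub: "x \<in> TCgens n a \<Longrightarrow> x \<in> TC n a"
  unfolding tangent_cone_ideal_def by (rule ideal_gen_mem)

section \<open>Classes of monomials and the basic vanishing lemma\<close>

definition cls :: "nat \<Rightarrow> (nat \<Rightarrow> nat) \<Rightarrow> nat \<Rightarrow> nat \<Rightarrow> (nat \<Rightarrow>\<^sub>0 nat) set" where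
  "cls n a D h = {\<alpha>. ks \<alpha> \<subseteq> {..<n} \<and> tdeg \<alpha> = D \<and> wsum a \<alpha> = h}"

definition good :: "nat \<Rightarrow> (nat \<Rightarrow> nat) \<Rightarrow> nat \<Rightarrow> nat \<Rightarrow> bool" where
  "good n a D h \<longleftrightarrow> (\<forall>\<beta>. ks \<beta> \<subseteq> {..<n} \<longrightarrow> wsum a \<beta> = h \<longrightarrow> tdeg \<beta> \<le> D)"

lemma gen_vanish:
  assumes gd: "good n a D h" and xX: "x \<in> TCgens n a" and \<gamma>S: "ks \<gamma> \<subseteq> {..<n}"
  shows "lsum {\<delta>. \<gamma> + \<delta> \<in> cls n a D h} (x :: 'k::field mpoly) = 0"
proof -
  obtain f where x: "x = initial_form f" and fI: "f \<in> toric_ideal n a" and f0: "f \<noteq> 0" using xX by blast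
  have fS: "in_S n f" and fe: "sg_eval a f = 0" using fI unfolding toric_ideal_def by auto
  define m where "m = Min (tdeg ` ks f)"
  let ?T = "{\<delta>. \<gamma> + \<delta> \<in> cls n a D h}"
  show ?thesis
  proof (cases "ks x \<inter> ?T = {}")
    case True then show ?thesis by (rule lsum_empty)
  next
    case False
    then obtain \<delta>0 where d0: "\<delta>0 \<in> ks x" "\<gamma> + \<delta>0 \<in> cls n a D h" by blast
    have d0m: "tdeg \<delta>0 = m" using keys_initial_form_tdeg d0(1) unfolding x m_def by blast
    define h' where "h' = wsum a \<delta>0"
    have D: "D = tdeg \<gamma> + m" and h: "h = wsum a \<gamma> + h'"
      using d0(2) d0m unfolding cls_def h'_def by (auto simp: tdeg_add wsum_add)
    have seteq: "ks x \<inter> ?T = ks f \<inter> {\<alpha>. wsum a \<alpha> = h'}"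
    proof
      show "ks x \<inter> ?T \<subseteq> ks f \<inter> {\<alpha>. wsum a \<alpha> = h'}"
        using keys_initial_form[of f] h unfolding x cls_def by (auto simp: wsum_add)
    next
      show "ks f \<inter> {\<alpha>. wsum a \<alpha> = h'} \<subseteq> ks x \<inter> ?T"
      proof
        fix \<delta> assume d: "\<delta> \<in> ks f \<inter> {\<alpha>. wsum a \<alpha> = h'}"
        have dS: "ks \<delta> \<subseteq> {..<n}" using d fS in_S_keys[of n f \<delta>] by blast
        have gdS: "ks (\<gamma> + \<delta>) \<subseteq> {..<n}" using dS \<gamma>S by (simp add: keys_add_nat)
        have "wsum a (\<gamma> + \<delta>) = h" using d h by (simp add: wsum_add)
        then have "tdeg (\<gamma> + \<delta>) \<le> D" using gd gdS unfolding good_def by blast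
        then have le: "tdeg \<delta> \<le> m" using D by (simp add: tdeg_add)
        have "m \<le> tdeg \<delta>" unfolding m_def using d by (intro Min_le) auto
        then have dm: "tdeg \<delta> = m" using le by simp
        have "lk x \<delta> = lk f \<delta>" unfolding x using dm by (simp add: lookup_initial_form m_def)
        then have "\<delta> \<in> ks x" using d by (simp add: in_keys_iff)
        moreover have "\<gamma> + \<delta> \<in> cls n a D h"
          unfolding cls_def using gdS \<open>wsum a (\<gamma> + \<delta>) = h\<close> dm D by (simp add: tdeg_add)
        ultimately show "\<delta> \<in> ks x \<inter> ?T" by simp
      qed
    qed
    have "lsum ?T x = (\<Sum>\<delta>\<in>ks f \<inter> {\<alpha>. wsum a \<alpha> = h'}. lk x \<delta>)"
      unfolding lsum_def seteq ..
    also have "\<dots> = (\<Sum>\<delta>\<in>ks f \<inter> {\<alpha>. wsum a \<alpha> = h'}. lk f \<delta>)"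
    proof (rule sum.cong)
      fix \<delta> assume "\<delta> \<in> ks f \<inter> {\<alpha>. wsum a \<alpha> = h'}"
      then have "\<delta> \<in> ks x" using seteq by blast
      then have "tdeg \<delta> = m" using keys_initial_form_tdeg unfolding x m_def by blast
      then show "lk x \<delta> = lk f \<delta>" unfolding x by (simp add: lookup_initial_form m_def)
    qed simp
    also have "\<dots> = coeff (sg_eval a f) h'" unfolding coeff_sg_eval lsum_def ..
    also have "\<dots> = 0" using fe by simp
    finally show ?thesis .
  qed
qed

lemma TC_vanish:
  assumes "good n a D h" "p \<in> TC n a"
  shows "lsum (cls n a D h) (p :: 'k::field mpoly) = 0"
  using assms(2) unfolding tangent_cone_ideal_def
  by (rule ideal_gen_lsum_zero[rotated]) (use gen_vanish[OF assms(1)] in blast)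

lemma TC_rigid:
  assumes "good n a (tdeg \<alpha>) (wsum a \<alpha>)" "cls n a (tdeg \<alpha>) (wsum a \<alpha>) = {\<alpha>}" "p \<in> TC n a"
  shows "lk (p :: 'k::field mpoly) \<alpha> = 0"
  using TC_vanish[OF assms(1,3)] assms(2) by (simp add: lsum_singleton)


lemma lsum_diff: "lsum S (p - q) = lsum S p - lsum S (q :: 'k::field mpoly)"
proof -
  have "lsum S p = lsum S ((p - q) + q)" by simp
  also have "\<dots> = lsum S (p - q) + lsum S q" by (rule lsum_add)
  finally show ?thesis by simp
qed

lemma tdeg_one:
  assumes "tdeg \<alpha> = 1" shows "\<exists>i. i \<in> ks \<alpha> \<and> \<alpha> = sgl i 1"
proof -
  have "\<alpha> \<noteq> 0" using assms by auto
  then obtain i where i: "i \<in> ks \<alpha>" by (metis all_not_in_conv keys_eq_empty)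
  have fin: "finite (ks \<alpha>)" by simp
  have "tdeg \<alpha> = lk \<alpha> i + (\<Sum>j\<in>ks \<alpha> - {i}. lk \<alpha> j)"
    unfolding tdeg_def using sum.remove[OF fin i] by simp
  moreover have "lk \<alpha> i \<ge> 1" using i by (simp add: in_keys_iff)
  ultimately have li: "lk \<alpha> i = 1" and rest: "(\<Sum>j\<in>ks \<alpha> - {i}. lk \<alpha> j) = 0" using assms by linarith+
  have "\<forall>j\<in>ks \<alpha> - {i}. lk \<alpha> j = 0" using rest by simp
  then have others: "j \<noteq> i \<Longrightarrow> lk \<alpha> j = 0" for j by (auto simp: in_keys_iff)
  have "\<alpha> = sgl i 1"
  proof (rule poly_mapping_eqI)
    fix j show "lk \<alpha> j = lk (sgl i 1) j"
      by (cases "j = i") (simp_all add: li others lookup_single_not_eq)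
  qed
  then show ?thesis using i by blast
qed

lemma arith_key:
  fixes A d D D' w w' :: nat
  assumes cop: "coprime A d" and A: "A > 0" and eq: "A * D + d * w = A * D' + d * w'" and DD: "D < D'"
  shows "A \<le> w"
proof -
  define k where "k = D' - D"
  have k0: "k > 0" and D': "D' = D + k" using DD unfolding k_def by auto
  have e: "d * w = A * k + d * w'" using eq unfolding D' by (simp add: algebra_simps)
  have Ak: "A * k > 0" using A k0 by simp
  have d0: "d > 0" using e Ak by (cases "d = 0") auto
  have "d * w' < d * w" using e Ak by linarith
  then have ww: "w' < w" by simp
  have e2: "d * (w - w') = A * k" using e ww by (simp add: diff_mult_distrib2)
  then have "d dvd A * k" by (metis dvd_triv_left)
  then have "d dvd k" using cop by (simp add: coprime_commute coprime_dvd_mult_right_iff)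
  then have "d \<le> k" using k0 by (simp add: dvd_imp_le)
  then have "A * d \<le> A * k" by simp
  then have "d * A \<le> d * (w - w')" using e2 by (simp add: mult.commute)
  then have "A \<le> w - w'" using d0 by simp
  then show ?thesis by simp
qed

locale asg =
  fixes n d :: nat and a :: "nat \<Rightarrow> nat"
  assumes incr: "\<And>i. Suc i < n \<Longrightarrow> a i < a (Suc i)"
    and arith: "\<And>i. Suc i < n \<Longrightarrow> a (Suc i) = a i + d"
    and numsg: "finite (UNIV - sg_generated (a ` {..<n}))"
    and mingen: "\<And>i. i < n \<Longrightarrow> a i \<notin> sg_generated (a ` {..<n} - {a i})"
begin

abbreviation W :: "(nat \<Rightarrow>\<^sub>0 nat) \<Rightarrow> nat" where "W \<equiv> wsum (\<lambda>i. i)"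

abbreviation e :: "nat \<Rightarrow> (nat \<Rightarrow>\<^sub>0 nat)" where "e i \<equiv> sgl i 1"

lemma zero_sg: "0 \<in> sg_generated X"
  unfolding sg_generated_def by (rule CollectI, rule exI[of _ "\<lambda>_. 0"]) simp

lemma n_pos: "0 < n"
proof (rule ccontr)
  assume "\<not> 0 < n"
  then have "n = 0" by simp
  then have "sg_generated (a ` {..<n}) = {0}" unfolding sg_generated_def by auto
  then have "finite (UNIV - {0::nat})" using numsg by simp
  then show False by simp
qed

lemma a_pos: "i < n \<Longrightarrow> 0 < a i"
  using mingen[of i] zero_sg by (cases "a i = 0") auto

lemma a_lin: "i < n \<Longrightarrow> a i = a 0 + i * d"
proof (induction i)
  case (Suc i)
  then show ?case using arith[of i] by simp
qed simp

lemma a_mono: "i < j \<Longrightarrow> j < n \<Longrightarrow> a i < a j"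
proof (induction j)
  case (Suc j)
  then show ?case using incr[of j] by (cases "i = j") auto
qed simp

lemma a_inj: "inj_on a {..<n}"
proof (rule inj_onI)
  fix i j assume "i \<in> {..<n}" "j \<in> {..<n}" "a i = a j"
  then show "i = j" using a_mono[of i j] a_mono[of j i] by (cases i j rule: linorder_cases) auto
qed

lemma d_pos: "1 < n \<Longrightarrow> 0 < d"
  using incr[of 0] arith[of 0] by simp

lemma cop: "coprime (a 0) d"
proof -
  define g where "g = gcd (a 0) d"
  have gi: "g dvd a i" if "i < n" for i
    using a_lin[OF that] unfolding g_def by simp
  have gsg: "g dvd x" if "x \<in> sg_generated (a ` {..<n})" for x
  proof -
    have "\<exists>c. x = (\<Sum>b\<in>a ` {..<n}. c b * b)" using that by (simp add: sg_generated_def)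
    then obtain c where x: "x = (\<Sum>b\<in>a ` {..<n}. c b * b)" by blast
    show ?thesis unfolding x by (rule dvd_sum) (use gi in auto)
  qed
  obtain N where N: "\<forall>x\<in>UNIV - sg_generated (a ` {..<n}). x < N"
    using numsg finite_nat_set_iff_bounded by blast
  have "g \<noteq> 0" using a_pos[OF n_pos] unfolding g_def by auto
  then have "N \<le> N * g + 1" by (simp add: le_SucI)
  then have "N * g + 1 \<in> sg_generated (a ` {..<n})" using N by (metis DiffI UNIV_I leD)
  then have "g dvd N * g + 1" by (rule gsg)
  then have "g dvd 1" by (metis dvd_add_right_iff dvd_triv_right)
  then show ?thesis unfolding g_def by (simp add: coprime_iff_gcd_eq_1)
qed

lemma tdeg_sum: "ks \<alpha> \<subseteq> {..<n} \<Longrightarrow> tdeg \<alpha> = (\<Sum>i<n. lk \<alpha> i)"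
  unfolding tdeg_def by (rule sum.mono_neutral_left) (auto simp: in_keys_iff)

lemma W_sum: "ks \<alpha> \<subseteq> {..<n} \<Longrightarrow> W \<alpha> = (\<Sum>i<n. lk \<alpha> i * i)"
  by (simp add: wsum_superset)

lemma wsum_a: "ks \<alpha> \<subseteq> {..<n} \<Longrightarrow> wsum a \<alpha> = a 0 * tdeg \<alpha> + d * W \<alpha>"
proof -
  assume S: "ks \<alpha> \<subseteq> {..<n}"
  have "wsum a \<alpha> = (\<Sum>i<n. lk \<alpha> i * a i)" using S by (simp add: wsum_superset)
  also have "\<dots> = (\<Sum>i<n. a 0 * lk \<alpha> i + d * (lk \<alpha> i * i))"
  proof (rule sum.cong)
    fix i assume "i \<in> {..<n}"
    then have "a i = a 0 + i * d" by (intro a_lin) simp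
    then show "lk \<alpha> i * a i = a 0 * lk \<alpha> i + d * (lk \<alpha> i * i)" by (simp add: algebra_simps)
  qed simp
  also have "\<dots> = a 0 * tdeg \<alpha> + d * W \<alpha>"
    using S by (simp add: sum.distrib sum_distrib_left tdeg_sum W_sum)
  finally show ?thesis .
qed

lemma W_le: "ks \<alpha> \<subseteq> {..<n} \<Longrightarrow> W \<alpha> \<le> (n - 1) * tdeg \<alpha>"
proof -
  assume S: "ks \<alpha> \<subseteq> {..<n}"
  have "W \<alpha> = (\<Sum>i<n. lk \<alpha> i * i)" using S by (rule W_sum)
  also have "\<dots> \<le> (\<Sum>i<n. lk \<alpha> i * (n - 1))"
  proof (rule sum_mono)
    fix i assume "i \<in> {..<n}"
    then have "i \<le> n - 1" by simp
    then show "lk \<alpha> i * i \<le> lk \<alpha> i * (n - 1)" by (rule mult_le_mono2)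
  qed
  also have "\<dots> = (n - 1) * tdeg \<alpha>" using S by (simp add: tdeg_sum sum_distrib_left mult.commute)
  finally show ?thesis .
qed

lemma tdeg_le_wsum: "ks \<alpha> \<subseteq> {..<n} \<Longrightarrow> tdeg \<alpha> \<le> wsum a \<alpha>"
proof -
  assume S: "ks \<alpha> \<subseteq> {..<n}"
  have "tdeg \<alpha> = (\<Sum>i<n. lk \<alpha> i * 1)" using S by (simp add: tdeg_sum)
  also have "\<dots> \<le> (\<Sum>i<n. lk \<alpha> i * a i)"
    by (rule sum_mono) (use a_pos in \<open>auto simp: Suc_le_eq\<close>)
  also have "\<dots> = wsum a \<alpha>" using wsum_superset[of "{..<n}" \<alpha> a] S by simp
  finally show ?thesis .
qed

lemma good_of_W:
  assumes S: "ks \<beta> \<subseteq> {..<n}" and W: "W \<beta> < a 0"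
  shows "good n a (tdeg \<beta>) (wsum a \<beta>)"
  unfolding good_def
proof (intro allI impI)
  fix \<beta>' assume S': "ks \<beta>' \<subseteq> {..<n}" and eq: "wsum a \<beta>' = wsum a \<beta>"
  show "tdeg \<beta>' \<le> tdeg \<beta>"
  proof (rule ccontr)
    assume "\<not> tdeg \<beta>' \<le> tdeg \<beta>"
    then have lt: "tdeg \<beta> < tdeg \<beta>'" by simp
    have "a 0 * tdeg \<beta> + d * W \<beta> = a 0 * tdeg \<beta>' + d * W \<beta>'"
      using eq wsum_a[OF S] wsum_a[OF S'] by simp
    then have "a 0 \<le> W \<beta>" using arith_key[OF cop a_pos[OF n_pos]] lt by blast
    then show False using W by simp
  qed
qed

end


lemma binom_facts:
  assumes Sa: "ks \<alpha> \<subseteq> {..<n}" and Sb: "ks \<beta> \<subseteq> {..<n}" and ne: "\<alpha> \<noteq> \<beta>"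
    and eq: "wsum a \<alpha> = wsum a \<beta>"
  shows "(sgl \<alpha> 1 - sgl \<beta> 1 :: 'k::field mpoly) \<in> toric_ideal n a"
    and "lk (sgl \<alpha> 1 - sgl \<beta> 1 :: 'k::field mpoly) \<gamma> = (if \<gamma> = \<alpha> then 1 else if \<gamma> = \<beta> then -1 else 0)"
    and "ks (sgl \<alpha> 1 - sgl \<beta> 1 :: 'k::field mpoly) = {\<alpha>, \<beta>}"
    and "(sgl \<alpha> 1 - sgl \<beta> 1 :: 'k::field mpoly) \<noteq> 0"
proof -
  define f :: "'k mpoly" where "f = sgl \<alpha> 1 - sgl \<beta> 1"
  have lkf: "lk f \<gamma> = (if \<gamma> = \<alpha> then 1 else if \<gamma> = \<beta> then -1 else 0)" for \<gamma>
    unfolding f_def using ne by (auto simp: lookup_minus lookup_single when_def)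
  then show "lk (sgl \<alpha> 1 - sgl \<beta> 1 :: 'k::field mpoly) \<gamma> = (if \<gamma> = \<alpha> then 1 else if \<gamma> = \<beta> then -1 else 0)"
    unfolding f_def .
  have ksf: "ks f = {\<alpha>, \<beta>}"
  proof
    show "ks f \<subseteq> {\<alpha>, \<beta>}"
    proof
      fix \<gamma> assume "\<gamma> \<in> ks f" then show "\<gamma> \<in> {\<alpha>, \<beta>}" using lkf[of \<gamma>] by (auto simp: in_keys_iff split: if_splits)
    qed
    show "{\<alpha>, \<beta>} \<subseteq> ks f" using lkf[of \<alpha>] lkf[of \<beta>] ne by (auto simp: in_keys_iff)
  qed
  then show "ks (sgl \<alpha> 1 - sgl \<beta> 1 :: 'k::field mpoly) = {\<alpha>, \<beta>}" unfolding f_def .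
  show "(sgl \<alpha> 1 - sgl \<beta> 1 :: 'k::field mpoly) \<noteq> 0"
  proof
    assume "(sgl \<alpha> 1 - sgl \<beta> 1 :: 'k::field mpoly) = 0"
    then have "lk f \<alpha> = 0" unfolding f_def by simp
    then show False using lkf[of \<alpha>] by simp
  qed
  have fS: "in_S n f" unfolding in_S_def ksf using Sa Sb by auto
  have "lsum {\<alpha>. wsum a \<alpha> = k} f = 0" for k
    unfolding f_def lsum_diff lsum_single using eq by simp
  then have "sg_eval a f = 0" by (simp add: sg_eval_zero_iff)
  then show "(sgl \<alpha> 1 - sgl \<beta> 1 :: 'k::field mpoly) \<in> toric_ideal n a"
    using fS unfolding toric_ideal_def f_def by simp
qed

context asg begin

lemma construct:
  assumes n2: "1 < n" and S: "ks \<alpha> \<subseteq> {..<n}" and Wa: "a 0 \<le> W \<alpha>"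
  shows "\<exists>\<beta>'. ks \<beta>' \<subseteq> {..<n} \<and> wsum a \<beta>' = wsum a \<alpha> \<and> tdeg \<alpha> < tdeg \<beta>'"
proof -
  define m where "m = n - 1"
  have m0: "0 < m" "m < n" using n2 unfolding m_def by auto
  define D where "D = tdeg \<alpha>"
  define E where "E = W \<alpha> - a 0"
  define q where "q = E div m"
  define r where "r = E mod m"
  have Eqr: "E = q * m + r" unfolding q_def r_def by simp
  have rm: "r < m" using m0 unfolding r_def by simp
  have WD: "W \<alpha> \<le> m * D" using W_le[OF S] unfolding m_def D_def by simp
  have a0: "0 < a 0" using a_pos n_pos by blast
  have "q * m \<le> E" using Eqr by simp
  also have "E < W \<alpha>" unfolding E_def using a0 Wa by simp
  also have "\<dots> \<le> m * D" by (rule WD)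
  finally have "q * m < D * m" by (simp add: mult.commute)
  then have qD: "q < D" by simp
  have dp: "0 < d" using d_pos[OF n2] .
  define \<beta>' where "\<beta>' = sgl m q + sgl r 1 + sgl 0 (D + d - q - 1)"
  have td: "tdeg \<beta>' = D + d" unfolding \<beta>'_def using qD by (simp add: tdeg_add tdeg_single)
  have Wb: "W \<beta>' = E" unfolding \<beta>'_def using Eqr by (simp add: wsum_add wsum_single)
  have Sb: "ks \<beta>' \<subseteq> {..<n}"
  proof -
    have "ks \<beta>' \<subseteq> ks (sgl m q) \<union> ks (sgl r (1::nat)) \<union> ks (sgl 0 (D + d - q - 1))"
      unfolding \<beta>'_def by (simp add: keys_add_nat)
    also have "\<dots> \<subseteq> {m, r, 0}" by auto
    also have "\<dots> \<subseteq> {..<n}" using m0 rm by auto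
    finally show ?thesis .
  qed
  have "wsum a \<beta>' = a 0 * (D + d) + d * E" using wsum_a[OF Sb] td Wb by simp
  also have "\<dots> = a 0 * D + (d * E + d * a 0)" by (simp add: algebra_simps)
  also have "d * E + d * a 0 = d * W \<alpha>" unfolding E_def using Wa by (simp add: add_mult_distrib2[symmetric])
  also have "a 0 * D + d * W \<alpha> = wsum a \<alpha>" using wsum_a[OF S] unfolding D_def by simp
  finally have "wsum a \<beta>' = wsum a \<alpha>" .
  moreover have "tdeg \<alpha> < tdeg \<beta>'" using td dp unfolding D_def by simp
  ultimately show ?thesis using Sb by blast
qed

lemma mono_in_TC:
  assumes n2: "1 < n" and S: "ks \<alpha> \<subseteq> {..<n}" and Wa: "a 0 \<le> W \<alpha>"
  shows "(sgl \<alpha> 1 :: 'k::field mpoly) \<in> TC n a"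
proof -
  obtain \<beta> where Sb: "ks \<beta> \<subseteq> {..<n}" and eq: "wsum a \<beta> = wsum a \<alpha>" and lt: "tdeg \<alpha> < tdeg \<beta>"
    using construct[OF assms] by blast
  have ne: "\<alpha> \<noteq> \<beta>" using lt by auto
  define f :: "'k mpoly" where "f = sgl \<alpha> 1 - sgl \<beta> 1"
  note bf = binom_facts[OF S Sb ne eq[symmetric], where 'k='k, folded f_def]
  have mn: "Min (tdeg ` ks f) = tdeg \<alpha>" unfolding bf(3) using lt by simp
  have "initial_form f = sgl \<alpha> 1"
  proof (rule poly_mapping_eqI)
    fix \<gamma>
    show "lk (initial_form f) \<gamma> = lk (sgl \<alpha> 1) \<gamma>"
      unfolding lookup_initial_form mn bf(2) using lt by (auto simp: lookup_single when_def)
  qed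
  then have "\<exists>g. (sgl \<alpha> 1 :: 'k mpoly) = initial_form g \<and> g \<in> toric_ideal n a \<and> g \<noteq> 0" using bf(1,4) by metis
  then have "(sgl \<alpha> 1 :: 'k mpoly) \<in> TCgens n a" by simp
  then show ?thesis by (rule TCgens_sub)
qed

lemma quad_in_TC:
  assumes ij: "1 \<le> i" "i \<le> j" "j + 1 < n"
  shows "\<exists>f :: 'k::field mpoly. f \<in> TC n a \<and> f \<noteq> 0 \<and> lm f = e i + e j"
proof -
  define \<mu> where "\<mu> = e i + e j"
  define \<nu> where "\<nu> = e (i - 1) + e (j + 1)"
  have lm\<mu>: "lk \<mu> k = (if k = i then 1 else 0) + (if k = j then 1 else 0)" for k
    unfolding \<mu>_def by (simp add: lookup_add lookup_single when_def)
  have lk\<nu>: "lk \<nu> k = (if k = i - 1 then 1 else 0) + (if k = j + 1 then 1 else 0)" for k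
    unfolding \<nu>_def by (simp add: lookup_add lookup_single when_def)
  have \<mu>0: "lk \<mu> (j + 1) = 0" using lm\<mu>[of "j+1"] ij by simp
  have \<nu>1: "lk \<nu> (j + 1) \<ge> 1" using lk\<nu>[of "j+1"] by simp
  have ne: "\<mu> \<noteq> \<nu>" using \<mu>0 \<nu>1 by auto
  have S\<mu>: "ks \<mu> \<subseteq> {..<n}" unfolding \<mu>_def using ij by (auto simp: keys_add_nat)
  have S\<nu>: "ks \<nu> \<subseteq> {..<n}" unfolding \<nu>_def using ij by (auto simp: keys_add_nat)
  have "wsum a \<mu> = a i + a j" unfolding \<mu>_def by (simp add: wsum_add wsum_single)
  also have "\<dots> = a (i - 1) + a (j + 1)"
  proof -
    have l1: "a i + a j = a 0 + a 0 + (i + j) * d"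
      using a_lin[of i] a_lin[of j] ij by (simp add: add_mult_distrib)
    obtain i' where i': "i = Suc i'" using ij by (cases i) auto
    have l2: "a (i - 1) + a (j + 1) = a 0 + a 0 + ((i - 1) + (j + 1)) * d"
      using a_lin[of "i'"] a_lin[of "j + 1"] ij i' by (simp add: add_mult_distrib)
    have "(i - 1) + (j + 1) = i + j" using ij by simp
    then show ?thesis using l1 l2 by simp
  qed
  also have "\<dots> = wsum a \<nu>" unfolding \<nu>_def by (simp add: wsum_add wsum_single)
  finally have eq: "wsum a \<mu> = wsum a \<nu>" .
  have t\<mu>: "tdeg \<mu> = 2" unfolding \<mu>_def by (simp add: tdeg_add tdeg_single)
  have t\<nu>: "tdeg \<nu> = 2" unfolding \<nu>_def by (simp add: tdeg_add tdeg_single)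
  define f :: "'k mpoly" where "f = sgl \<mu> 1 - sgl \<nu> 1"
  note bf = binom_facts[OF S\<mu> S\<nu> ne eq, where 'k='k, folded f_def]
  have mn: "Min (tdeg ` ks f) = 2" unfolding bf(3) using t\<mu> t\<nu> by simp
  have "initial_form f = f"
  proof (rule poly_mapping_eqI)
    fix \<gamma>
    show "lk (initial_form f) \<gamma> = lk f \<gamma>"
      unfolding lookup_initial_form mn bf(2) using t\<mu> t\<nu> by auto
  qed
  then have "f \<in> TCgens n a" using bf(1,4) by (metis (mono_tags, lifting) mem_Collect_eq)
  then have fT: "f \<in> TC n a" by (rule TCgens_sub)
  have "rl \<nu> \<mu>" unfolding rl_def
  proof (intro exI conjI allI impI)
    show "lk \<mu> (j + 1) < lk \<nu> (j + 1)" using \<mu>0 \<nu>1 by simp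
    fix k assume "j + 1 < k"
    then show "lk \<mu> k = lk \<nu> k" using lm\<mu>[of k] lk\<nu>[of k] ij by simp
  qed
  then have "drl_less \<nu> \<mu>" using t\<mu> t\<nu> by (simp add: drl_less_rl)
  then have "lm f = \<mu>" by (intro lm_eqI) (auto simp: bf(3))
  then show ?thesis using fT bf(4) unfolding \<mu>_def by blast
qed

lemma zero_rigid: "ks \<beta> \<subseteq> {..<n} \<Longrightarrow> wsum a \<beta> = 0 \<Longrightarrow> \<beta> = 0"
  using tdeg_le_wsum[of \<beta>] tdeg_eq_0[of \<beta>] by simp

lemma e_rigid:
  assumes i: "i < n" and S: "ks \<beta> \<subseteq> {..<n}" and w: "wsum a \<beta> = a i"
  shows "\<beta> = e i"
proof (cases "lk \<beta> i = 0")
  case False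
  have dv: "mdvd (e i) \<beta>" unfolding mdvd_def using False by (simp add: lookup_single when_def)
  define \<beta>'' where "\<beta>'' = \<beta> - e i"
  have be: "\<beta>'' + e i = \<beta>" unfolding \<beta>''_def by (rule mdvd_add[OF dv])
  have S'': "ks \<beta>'' \<subseteq> {..<n}" using S keys_minus_sub[of \<beta> "e i"] unfolding \<beta>''_def by blast
  have "wsum a \<beta>'' + a i = a i" using w be wsum_add[of a \<beta>'' "e i"] by (simp add: wsum_single)
  then have "\<beta>'' = 0" using zero_rigid[OF S''] by simp
  then show ?thesis using be by simp
next
  case True
  define inv where "inv = the_inv_into {..<n} a"
  define c where "c b = lk \<beta> (inv b)" for b
  have A: "a ` {..<n} - {a i} = a ` ({..<n} - {i})"
    using a_inj i by (auto simp: inj_on_def)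
  have "(\<Sum>b\<in>a ` {..<n} - {a i}. c b * b) = (\<Sum>k\<in>{..<n} - {i}. c (a k) * a k)"
    unfolding A by (rule sum.reindex_cong[where l=a]) (use a_inj in \<open>auto simp: inj_on_def\<close>)
  also have "\<dots> = (\<Sum>k\<in>{..<n} - {i}. lk \<beta> k * a k)"
    by (rule sum.cong) (simp_all add: c_def inv_def the_inv_into_f_f[OF a_inj])
  also have "\<dots> = (\<Sum>k<n. lk \<beta> k * a k)"
    using True i by (intro sum.mono_neutral_left) auto
  also have "\<dots> = a i" using w wsum_superset[of "{..<n}" \<beta> a] S by simp
  finally have "a i \<in> sg_generated (a ` {..<n} - {a i})"
    unfolding sg_generated_def by (metis (mono_tags, lifting) mem_Collect_eq)
  then show ?thesis using mingen[OF i] by simp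
qed

lemma TC_keys_tdeg:
  assumes p: "(p :: 'k::field mpoly) \<in> TC n a" and \<alpha>: "\<alpha> \<in> ks p"
  shows "2 \<le> tdeg \<alpha>"
proof (rule ccontr)
  assume "\<not> 2 \<le> tdeg \<alpha>"
  then have "tdeg \<alpha> = 0 \<or> tdeg \<alpha> = 1" by arith
  have S: "ks \<alpha> \<subseteq> {..<n}" using TC_in_S[OF p] \<alpha> by (rule in_S_keys)
  then show False
  proof (cases "tdeg \<alpha> = 0")
    case True
    then have a0: "\<alpha> = 0" by (simp add: tdeg_eq_0)
    have "good n a 0 0" unfolding good_def
    proof (intro allI impI)
      fix \<beta> assume "ks \<beta> \<subseteq> {..<n}" "wsum a \<beta> = 0"
      then have "\<beta> = 0" by (rule zero_rigid)
      then show "tdeg \<beta> \<le> 0" by simp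
    qed
    moreover have "cls n a 0 0 = {0}" unfolding cls_def using zero_rigid by auto
    ultimately have "lk p 0 = 0" using TC_rigid[of n a 0 p] p by simp
    then show False using \<alpha> a0 by (simp add: in_keys_iff)
  next
    case False
    then have "tdeg \<alpha> = 1" using \<open>tdeg \<alpha> = 0 \<or> tdeg \<alpha> = 1\<close> by simp
    then obtain i where i: "i \<in> ks \<alpha>" "\<alpha> = e i" using tdeg_one by blast
    have iN: "i < n" using i S by auto
    have w: "wsum a \<alpha> = a i" "tdeg \<alpha> = 1" using i by (simp_all add: wsum_single tdeg_single)
    have "good n a 1 (a i)" unfolding good_def
    proof (intro allI impI)
      fix \<beta> assume "ks \<beta> \<subseteq> {..<n}" "wsum a \<beta> = a i"
      then have "\<beta> = e i" by (rule e_rigid[OF iN])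
      then show "tdeg \<beta> \<le> 1" by (simp add: tdeg_single)
    qed
    moreover have "cls n a 1 (a i) = {\<alpha>}" unfolding cls_def using e_rigid[OF iN] i S w by (auto simp: tdeg_single)
    ultimately have "lk p \<alpha> = 0" using TC_rigid[of n a \<alpha> p] p w by simp
    then show False using \<alpha> by (simp add: in_keys_iff)
  qed
qed

end


lemma mdvd_refl: "mdvd \<alpha> \<alpha>"
  unfolding mdvd_def by simp

lemma mdvd_trans: "mdvd \<alpha> \<beta> \<Longrightarrow> mdvd \<beta> \<gamma> \<Longrightarrow> mdvd \<alpha> \<gamma>"
  unfolding mdvd_def using le_trans by blast

lemma mdvd_tdeg: "mdvd \<alpha> \<beta> \<Longrightarrow> tdeg \<alpha> \<le> tdeg \<beta>"
  using mdvd_add[of \<alpha> \<beta>] tdeg_add[of "\<beta> - \<alpha>" \<alpha>] by simp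

lemma mdvd_tdeg_eq: "mdvd \<alpha> \<beta> \<Longrightarrow> tdeg \<beta> \<le> tdeg \<alpha> \<Longrightarrow> \<alpha> = \<beta>"
proof -
  assume dv: "mdvd \<alpha> \<beta>" and le: "tdeg \<beta> \<le> tdeg \<alpha>"
  have e: "(\<beta> - \<alpha>) + \<alpha> = \<beta>" by (rule mdvd_add[OF dv])
  then have "tdeg (\<beta> - \<alpha>) + tdeg \<alpha> = tdeg \<beta>" by (metis tdeg_add)
  then have "tdeg (\<beta> - \<alpha>) = 0" using le by simp
  then have "\<beta> - \<alpha> = 0" by (simp add: tdeg_eq_0)
  then show "\<alpha> = \<beta>" using e by simp
qed

lemma mdvd_minus: "mdvd (\<beta> - \<alpha>) \<beta>"
  unfolding mdvd_def by (simp add: lookup_minus)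

lemma lm_single: "c \<noteq> 0 \<Longrightarrow> lm (sgl \<alpha> c) = \<alpha>"
  by (rule lm_eqI) auto

lemma sum3:
  assumes "1 \<le> m"
  shows "(\<Sum>k<Suc m. f k) = f 0 + (\<Sum>k\<in>{1..<m}. f k) + (f m :: nat)"
proof -
  have "{..<m} = insert 0 {1..<m}" using assms by auto
  then have "(\<Sum>k<m. f k) = f 0 + (\<Sum>k\<in>{1..<m}. f k)" by simp
  then show ?thesis by simp
qed

context asg begin

abbreviation m :: nat where "m \<equiv> n - 1"

definition mid :: "(nat \<Rightarrow>\<^sub>0 nat) \<Rightarrow> nat" where
  "mid \<gamma> = (\<Sum>k\<in>{1..<m}. lk \<gamma> k)"

definition Mw :: "(nat \<Rightarrow>\<^sub>0 nat) \<Rightarrow> nat" where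
  "Mw \<gamma> = (\<Sum>k\<in>{1..<m}. lk \<gamma> k * k)"

lemma split_tdeg:
  assumes n2: "1 < n" and S: "ks \<gamma> \<subseteq> {..<n}"
  shows "tdeg \<gamma> = lk \<gamma> 0 + mid \<gamma> + lk \<gamma> m"
proof -
  have n: "n = Suc m" using n2 by simp
  have "tdeg \<gamma> = (\<Sum>k<Suc m. lk \<gamma> k)" using tdeg_sum[OF S] n by simp
  also have "\<dots> = lk \<gamma> 0 + mid \<gamma> + lk \<gamma> m" unfolding mid_def using n2 by (intro sum3) simp
  finally show ?thesis .
qed

lemma split_W:
  assumes n2: "1 < n" and S: "ks \<gamma> \<subseteq> {..<n}"
  shows "W \<gamma> = Mw \<gamma> + lk \<gamma> m * m"
proof -
  have n: "n = Suc m" using n2 by simp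
  have "W \<gamma> = (\<Sum>k<Suc m. lk \<gamma> k * k)" using W_sum[OF S] n by simp
  also have "\<dots> = lk \<gamma> 0 * 0 + Mw \<gamma> + lk \<gamma> m * m" unfolding Mw_def using n2 by (intro sum3) simp
  finally show ?thesis by simp
qed

lemma mid_cases:
  assumes "mid \<gamma> \<le> 1"
  shows "(\<forall>k\<in>{1..<m}. lk \<gamma> k = 0) \<or> (\<exists>j\<in>{1..<m}. lk \<gamma> j = 1 \<and> (\<forall>k\<in>{1..<m}. k \<noteq> j \<longrightarrow> lk \<gamma> k = 0))"
proof (cases "\<forall>k\<in>{1..<m}. lk \<gamma> k = 0")
  case False
  then obtain j where j: "j \<in> {1..<m}" "lk \<gamma> j \<noteq> 0" by blast
  have fin: "finite {1..<m}" by simp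
  have "mid \<gamma> = lk \<gamma> j + (\<Sum>k\<in>{1..<m} - {j}. lk \<gamma> k)"
    unfolding mid_def using sum.remove[OF fin j(1)] by simp
  then have l1: "lk \<gamma> j = 1" and r0: "(\<Sum>k\<in>{1..<m} - {j}. lk \<gamma> k) = 0" using assms j(2) by linarith+
  have "\<forall>k\<in>{1..<m}. k \<noteq> j \<longrightarrow> lk \<gamma> k = 0" using r0 by simp
  then show ?thesis using l1 j(1) by blast
qed simp

lemma mid_lookup:
  assumes "mid \<gamma> \<le> 1" "k \<in> {1..<m}"
  shows "lk \<gamma> k = (if k = Mw \<gamma> then 1 else 0)"
proof -
  from mid_cases[OF assms(1)] show ?thesis
  proof
    assume all0: "\<forall>k\<in>{1..<m}. lk \<gamma> k = 0"
    then have "Mw \<gamma> = 0" unfolding Mw_def by simp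
    then show ?thesis using all0 assms(2) by auto
  next
    assume "\<exists>j\<in>{1..<m}. lk \<gamma> j = 1 \<and> (\<forall>k\<in>{1..<m}. k \<noteq> j \<longrightarrow> lk \<gamma> k = 0)"
    then obtain j where j: "j \<in> {1..<m}" "lk \<gamma> j = 1" "\<forall>k\<in>{1..<m}. k \<noteq> j \<longrightarrow> lk \<gamma> k = 0" by blast
    have fin: "finite {1..<m}" by simp
    have "Mw \<gamma> = lk \<gamma> j * j + (\<Sum>k\<in>{1..<m} - {j}. lk \<gamma> k * k)"
      unfolding Mw_def using sum.remove[OF fin j(1)] by simp
    also have "(\<Sum>k\<in>{1..<m} - {j}. lk \<gamma> k * k) = 0" using j(3) by simp
    finally have "Mw \<gamma> = j" using j(2) by simp
    then show ?thesis using j assms(2) by auto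
  qed
qed

lemma Mw_less:
  assumes "mid \<gamma> \<le> 1" "1 < n" shows "Mw \<gamma> < m"
proof -
  from mid_cases[OF assms(1)] show ?thesis
  proof
    assume all0: "\<forall>k\<in>{1..<m}. lk \<gamma> k = 0"
    then have "Mw \<gamma> = 0" unfolding Mw_def by simp
    then show ?thesis using assms(2) by simp
  next
    assume "\<exists>j\<in>{1..<m}. lk \<gamma> j = 1 \<and> (\<forall>k\<in>{1..<m}. k \<noteq> j \<longrightarrow> lk \<gamma> k = 0)"
    then obtain j where j: "j \<in> {1..<m}" by blast
    have "lk \<gamma> j = (if j = Mw \<gamma> then 1 else 0)" by (rule mid_lookup[OF assms(1) j])
    have "Mw \<gamma> \<noteq> 0 \<longrightarrow> Mw \<gamma> < m"
      using \<open>\<exists>j\<in>{1..<m}. lk \<gamma> j = 1 \<and> _\<close> mid_lookup[OF assms(1)] by (metis atLeastLessThan_iff zero_neq_one)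
    then show ?thesis using assms(2) by (cases "Mw \<gamma> = 0") auto
  qed
qed

lemma mid_val:
  assumes "mid \<gamma> \<le> 1" shows "mid \<gamma> = (if Mw \<gamma> = 0 then 0 else 1)"
proof -
  from mid_cases[OF assms(1)] show ?thesis
  proof
    assume all0: "\<forall>k\<in>{1..<m}. lk \<gamma> k = 0"
    then show ?thesis unfolding Mw_def mid_def by simp
  next
    assume "\<exists>j\<in>{1..<m}. lk \<gamma> j = 1 \<and> (\<forall>k\<in>{1..<m}. k \<noteq> j \<longrightarrow> lk \<gamma> k = 0)"
    then obtain j where j: "j \<in> {1..<m}" "lk \<gamma> j = 1" "\<forall>k\<in>{1..<m}. k \<noteq> j \<longrightarrow> lk \<gamma> k = 0" by blast
    have fin: "finite {1..<m}" by simp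
    have "mid \<gamma> = lk \<gamma> j + (\<Sum>k\<in>{1..<m} - {j}. lk \<gamma> k)"
      unfolding mid_def using sum.remove[OF fin j(1)] by simp
    then have m1: "mid \<gamma> = 1" using j by simp
    have "Mw \<gamma> = lk \<gamma> j * j + (\<Sum>k\<in>{1..<m} - {j}. lk \<gamma> k * k)"
      unfolding Mw_def using sum.remove[OF fin j(1)] by simp
    then have "Mw \<gamma> = j" using j by simp
    then show ?thesis using m1 j(1) by simp
  qed
qed

lemma uniq:
  assumes n2: "1 < n" and Sa: "ks \<alpha> \<subseteq> {..<n}" and Sb: "ks \<beta> \<subseteq> {..<n}"
    and td: "tdeg \<alpha> = tdeg \<beta>" and Weq: "W \<alpha> = W \<beta>" and ma: "mid \<alpha> \<le> 1" and mb: "mid \<beta> \<le> 1"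
  shows "\<alpha> = \<beta>"
proof -
  have m0: "0 < m" using n2 by simp
  have wa: "W \<alpha> = Mw \<alpha> + lk \<alpha> m * m" by (rule split_W[OF n2 Sa])
  have wb: "W \<beta> = Mw \<beta> + lk \<beta> m * m" by (rule split_W[OF n2 Sb])
  have la: "Mw \<alpha> < m" by (rule Mw_less[OF ma n2])
  have lb: "Mw \<beta> < m" by (rule Mw_less[OF mb n2])
  have "W \<alpha> mod m = Mw \<alpha>" using wa la by simp
  moreover have "W \<beta> mod m = Mw \<beta>" using wb lb by simp
  ultimately have Mweq: "Mw \<alpha> = Mw \<beta>" using Weq by simp
  have "W \<alpha> div m = lk \<alpha> m" using wa la m0 by simp
  moreover have "W \<beta> div m = lk \<beta> m" using wb lb m0 by simp
  ultimately have lkm: "lk \<alpha> m = lk \<beta> m" using Weq by simp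
  have midv: "mid \<alpha> = mid \<beta>" using mid_val[OF ma] mid_val[OF mb] Mweq by simp
  have lk0: "lk \<alpha> 0 = lk \<beta> 0" using split_tdeg[OF n2 Sa] split_tdeg[OF n2 Sb] td midv lkm by simp
  show ?thesis
  proof (rule poly_mapping_eqI)
    fix k show "lk \<alpha> k = lk \<beta> k"
    proof (cases "k < n")
      case False
      then have "k \<notin> ks \<alpha>" "k \<notin> ks \<beta>" using Sa Sb by auto
      then show ?thesis by (simp add: in_keys_iff)
    next
      case True
      then have "k = 0 \<or> k \<in> {1..<m} \<or> k = m" by auto
      then show ?thesis using lk0 lkm mid_lookup[OF ma, of k] mid_lookup[OF mb, of k] Mweq by auto
    qed
  qed
qed

lemma mid_le1:
  assumes nd: "\<And>i j. 1 \<le> i \<Longrightarrow> i \<le> j \<Longrightarrow> j + 1 < n \<Longrightarrow> \<not> mdvd (e i + e j) \<gamma>"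
  shows "mid \<gamma> \<le> 1"
proof (rule ccontr)
  assume "\<not> mid \<gamma> \<le> 1"
  then have m2: "2 \<le> mid \<gamma>" by simp
  then have "mid \<gamma> \<noteq> 0" by simp
  then obtain i where i: "i \<in> {1..<m}" "lk \<gamma> i \<noteq> 0" unfolding mid_def by (metis sum.neutral)
  have fin: "finite {1..<m}" by simp
  have sp: "mid \<gamma> = lk \<gamma> i + (\<Sum>k\<in>{1..<m} - {i}. lk \<gamma> k)"
    unfolding mid_def using sum.remove[OF fin i(1)] by simp
  have mdv: "mdvd (e i + e j) \<gamma>" if "lk \<gamma> i \<ge> (if i = j then 2 else 1)" "lk \<gamma> j \<ge> 1" for j
    unfolding mdvd_def using that by (auto simp: lookup_add lookup_single when_def)
  show False
  proof (cases "lk \<gamma> i \<ge> 2")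
    case True
    then have "mdvd (e i + e i) \<gamma>" using mdv[of i] by simp
    moreover have "i + 1 < n" using i(1) by auto
    moreover have "1 \<le> i" using i(1) by auto
    ultimately show False using nd[of i i] by blast
  next
    case False
    then have "(\<Sum>k\<in>{1..<m} - {i}. lk \<gamma> k) \<noteq> 0" using sp m2 by linarith
    then obtain j where j: "j \<in> {1..<m} - {i}" "lk \<gamma> j \<noteq> 0" by (metis sum.neutral)
    have "mdvd (e i + e j) \<gamma>" using mdv[of j] i j by auto
    moreover have "mdvd (e j + e i) \<gamma>" using mdv[of j] i j by (auto simp: add.commute)
    moreover have "i + 1 < n" "j + 1 < n" "1 \<le> i" "1 \<le> j" using i(1) j(1) by auto
    ultimately show False
    proof (cases "i \<le> j")
      case True
      then show False using nd[of i j] \<open>mdvd (e i + e j) \<gamma>\<close> \<open>j + 1 < n\<close> \<open>1 \<le> i\<close> by blast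
    next
      case False
      then have "j \<le> i" by simp
      then show False using nd[of j i] \<open>mdvd (e j + e i) \<gamma>\<close> \<open>i + 1 < n\<close> \<open>1 \<le> j\<close> by blast
    qed
  qed
qed

lemma all_at_m:
  assumes n2: "1 < n" and S: "ks \<gamma> \<subseteq> {..<n}" and z: "\<And>k. k < m \<Longrightarrow> lk \<gamma> k = 0"
  shows "W \<gamma> = m * tdeg \<gamma>"
proof -
  have "W \<gamma> = (\<Sum>k<n. lk \<gamma> k * k)" by (rule W_sum[OF S])
  also have "\<dots> = (\<Sum>k<n. lk \<gamma> k * m)"
  proof (rule sum.cong)
    fix k assume "k \<in> {..<n}"
    then have "k < m \<or> k = m" by auto
    then show "lk \<gamma> k * k = lk \<gamma> k * m" using z by auto
  qed simp
  also have "\<dots> = m * tdeg \<gamma>" using S by (simp add: tdeg_sum sum_distrib_left mult.commute)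
  finally show ?thesis .
qed

lemma one_idx:
  assumes n2: "1 < n" and S: "ks \<gamma> \<subseteq> {..<n}" and md: "mid \<gamma> \<le> 1" and z0: "lk \<gamma> 0 = 0"
    and t: "1 \<le> tdeg \<gamma>"
  shows "\<exists>i<n. lk \<gamma> i \<ge> 1 \<and> W \<gamma> = i + m * (tdeg \<gamma> - 1)"
proof -
  have m0: "0 < m" using n2 by simp
  obtain i where i: "i < n" "lk \<gamma> i \<ge> 1" "\<And>k. k < m \<Longrightarrow> k \<noteq> i \<Longrightarrow> lk \<gamma> k = 0" "i \<noteq> m \<Longrightarrow> lk \<gamma> i = 1"
  proof (cases "Mw \<gamma> = 0")
    case True
    have mm: "mid \<gamma> = 0" using mid_val[OF md] True by simp
    have lm: "lk \<gamma> m \<ge> 1" using split_tdeg[OF n2 S] z0 mm t by simp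
    have "lk \<gamma> k = 0" if "k < m" for k
    proof (cases "k = 0")
      case False
      then have "k \<in> {1..<m}" using that by simp
      then show ?thesis using mid_lookup[OF md] True by simp
    qed (simp add: z0)
    then show ?thesis using that[of m] lm n2 by simp
  next
    case False
    define j where "j = Mw \<gamma>"
    have jm: "j \<in> {1..<m}" using False Mw_less[OF md n2] unfolding j_def by simp
    have lj: "lk \<gamma> j = 1" using mid_lookup[OF md jm] unfolding j_def by simp
    have "lk \<gamma> k = 0" if "k < m" "k \<noteq> j" for k
    proof (cases "k = 0")
      case False
      then have "k \<in> {1..<m}" using that by simp
      then show ?thesis using mid_lookup[OF md] that(2) unfolding j_def by simp
    qed (simp add: z0)
    then show ?thesis using that[of j] lj jm n2 by auto
  qed
  have ee: "e i \<le> e i" by simp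
  define \<gamma>' where "\<gamma>' = \<gamma> - e i"
  have dv: "mdvd (e i) \<gamma>" unfolding mdvd_def using i(2) by (simp add: lookup_single when_def)
  have ge: "\<gamma>' + e i = \<gamma>" unfolding \<gamma>'_def by (rule mdvd_add[OF dv])
  have S': "ks \<gamma>' \<subseteq> {..<n}" using S keys_minus_sub[of \<gamma> "e i"] unfolding \<gamma>'_def by blast
  have z': "lk \<gamma>' k = 0" if "k < m" for k
  proof (cases "k = i")
    case True
    then have "i \<noteq> m" using that by simp
    then show ?thesis using i(4) True unfolding \<gamma>'_def by (simp add: lookup_minus)
  next
    case False then show ?thesis using i(3)[OF that] unfolding \<gamma>'_def by (simp add: lookup_minus lookup_single_not_eq)
  qed
  have W': "W \<gamma>' = m * tdeg \<gamma>'" by (rule all_at_m[OF n2 S' z'])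
  have "W \<gamma> = W \<gamma>' + i" using ge wsum_add[of "\<lambda>i. i" \<gamma>' "e i"] by (simp add: wsum_single)
  moreover have "tdeg \<gamma> = tdeg \<gamma>' + 1" using ge tdeg_add[of \<gamma>' "e i"] by (simp add: tdeg_single)
  ultimately have "W \<gamma> = i + m * (tdeg \<gamma> - 1)" using W' by simp
  then show ?thesis using i by blast
qed

lemma n1_TC_zero:
  assumes n1: "n = 1" and p: "(p :: 'k::field mpoly) \<in> TC n a"
  shows "p = 0"
proof (rule ccontr)
  assume "p \<noteq> 0"
  then obtain \<alpha> where \<alpha>: "\<alpha> \<in> ks p" by (metis all_not_in_conv keys_eq_empty)
  have S: "ks \<alpha> \<subseteq> {..<n}" using TC_in_S[OF p] \<alpha> by (rule in_S_keys)
  have W0: "W \<alpha> = 0" using W_sum[OF S] n1 by simp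
  have gd: "good n a (tdeg \<alpha>) (wsum a \<alpha>)" using good_of_W[OF S] W0 a_pos[OF n_pos] by simp
  have "cls n a (tdeg \<alpha>) (wsum a \<alpha>) = {\<alpha>}"
  proof
    show "{\<alpha>} \<subseteq> cls n a (tdeg \<alpha>) (wsum a \<alpha>)" unfolding cls_def using S by simp
    show "cls n a (tdeg \<alpha>) (wsum a \<alpha>) \<subseteq> {\<alpha>}"
    proof
      fix \<beta> assume "\<beta> \<in> cls n a (tdeg \<alpha>) (wsum a \<alpha>)"
      then have Sb: "ks \<beta> \<subseteq> {..<n}" and tb: "tdeg \<beta> = tdeg \<alpha>" unfolding cls_def by auto
      have "\<beta> = \<alpha>"
      proof (rule poly_mapping_eqI)
        fix k show "lk \<beta> k = lk \<alpha> k"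
        proof (cases "k = 0")
          case True
          then show ?thesis using tdeg_sum[OF Sb] tdeg_sum[OF S] tb n1 by simp
        next
          case False
          then have "k \<notin> ks \<alpha>" "k \<notin> ks \<beta>" using S Sb n1 by auto
          then show ?thesis by (simp add: in_keys_iff)
        qed
      qed
      then show "\<beta> \<in> {\<alpha>}" by simp
    qed
  qed
  then have "lk p \<alpha> = 0" using TC_rigid[OF gd _ p] by simp
  then show False using \<alpha> by (simp add: in_keys_iff)
qed

end


context asg begin

lemma minimal:
  fixes G :: "'k::field mpoly set"
  assumes rgb: "is_reduced_groebner_basis (TC n a) G" and gG: "g \<in> G"
  shows "g \<notin> ideal_gen n (G - {g})"
proof
  assume gI: "g \<in> ideal_gen n (G - {g})"
  have rgb': "is_groebner_basis (TC n a) G \<and> (\<forall>g\<in>G. lc g = 1 \<and>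
        (\<forall>g'\<in>G. g' \<noteq> g \<longrightarrow> (\<forall>\<alpha>\<in>ks g. \<not> mdvd (lm g') \<alpha>)))"
    using rgb unfolding is_reduced_groebner_basis_def by simp
  have gbd: "finite G \<and> G \<subseteq> TC n a \<and> 0 \<notin> G \<and> (\<forall>f\<in>(TC n a :: 'k mpoly set). f \<noteq> 0 \<longrightarrow> (\<exists>g\<in>G. mdvd (lm g) (lm f)))"
    using conjunct1[OF rgb'] unfolding is_groebner_basis_def by simp
  have GI: "G \<subseteq> TC n a" using gbd by (elim conjE)
  have G0: "0 \<notin> G" using gbd by (elim conjE)
  have GBall: "\<forall>f\<in>(TC n a :: 'k mpoly set). f \<noteq> 0 \<longrightarrow> (\<exists>g\<in>G. mdvd (lm g) (lm f))" using gbd by (elim conjE)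
  have GB: "\<And>f. f \<in> (TC n a :: 'k mpoly set) \<Longrightarrow> f \<noteq> 0 \<Longrightarrow> \<exists>g\<in>G. mdvd (lm g) (lm f)"
    using GBall by simp
  have rall: "\<forall>g\<in>G. lc g = 1 \<and> (\<forall>g'\<in>G. g' \<noteq> g \<longrightarrow> (\<forall>\<alpha>\<in>ks g. \<not> mdvd (lm g') \<alpha>))"
    using conjunct2[OF rgb'] .
  have lc1: "\<And>g. g \<in> G \<Longrightarrow> lc g = 1" using rall by simp
  have red: "\<And>g g' \<alpha>. g \<in> G \<Longrightarrow> g' \<in> G \<Longrightarrow> g' \<noteq> g \<Longrightarrow> \<alpha> \<in> ks g \<Longrightarrow> \<not> mdvd (lm g') \<alpha>"
    using rall by simp
  have gT: "g \<in> TC n a" using gG GI by blast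
  have g0: "g \<noteq> 0" using gG G0 by blast
  define \<mu> where "\<mu> = lm g"
  have \<mu>k: "\<mu> \<in> ks g" using lm_in_keys[OF g0] \<mu>_def by simp
  have lk\<mu>: "lk g \<mu> = 1" using lc1[OF gG] unfolding lc_def \<mu>_def .
  have S\<mu>: "ks \<mu> \<subseteq> {..<n}" using TC_in_S[OF gT] \<mu>k by (rule in_S_keys)
  have t2: "2 \<le> tdeg \<mu>" using TC_keys_tdeg[OF gT \<mu>k] .
  have n2: "1 < n"
  proof (rule ccontr)
    assume "\<not> 1 < n" then have "n = 1" using n_pos by simp
    then have "g = 0" using n1_TC_zero gT by blast
    then show False using g0 by simp
  qed
  have notin: "\<mu> \<notin> ks x" if x: "x \<in> G - {g}" for x
  proof
    assume "\<mu> \<in> ks x"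
    moreover have "x \<in> G" "g \<noteq> x" using x by auto
    ultimately have "\<not> mdvd (lm g) \<mu>" using red[of x g \<mu>] gG by blast
    then show False using mdvd_refl \<mu>_def by simp
  qed
  have keysT: "2 \<le> tdeg \<alpha>" if "x \<in> G - {g}" "\<alpha> \<in> ks x" for x \<alpha>
    using TC_keys_tdeg[of x \<alpha>] that GI by blast
  show False
  proof (cases "tdeg \<mu> = 2")
    case True
    have "lsum {\<mu>} g = 0"
    proof (rule ideal_gen_lsum_zero[OF _ gI])
      fix x and \<gamma> :: "nat \<Rightarrow>\<^sub>0 nat" assume x: "x \<in> G - {g}" and \<gamma>S: "ks \<gamma> \<subseteq> {..<n}"
      show "lsum {\<delta>. \<gamma> + \<delta> \<in> {\<mu>}} x = 0"
      proof (rule lsum_empty)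
        show "ks x \<inter> {\<delta>. \<gamma> + \<delta> \<in> {\<mu>}} = {}"
        proof (rule ccontr)
          assume "ks x \<inter> {\<delta>. \<gamma> + \<delta> \<in> {\<mu>}} \<noteq> {}"
          then obtain \<delta> where \<delta>: "\<delta> \<in> ks x" "\<gamma> + \<delta> = \<mu>" by auto
          show False
          proof (cases "\<gamma> = 0")
            case True then show False using \<delta> notin[OF x] by simp
          next
            case False
            then have "tdeg \<gamma> \<noteq> 0" using tdeg_eq_0 by blast
            then have "tdeg \<delta> \<le> 1" using \<delta>(2) tdeg_add[of \<gamma> \<delta>] \<open>tdeg \<mu> = 2\<close> by simp
            then show False using keysT[OF x \<delta>(1)] by simp
          qed
        qed
      qed
    qed
    then show False using lk\<mu> by (simp add: lsum_singleton)
  next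
    case False
    then have t3: "3 \<le> tdeg \<mu>" using t2 by simp
    define D where "D = tdeg \<mu>"
    define C where "C = cls n a D (wsum a \<mu>)"
    have quadG: "\<exists>g''\<in>G. lm g'' = e i + e j" if ij: "1 \<le> i" "i \<le> j" "j + 1 < n" for i j
    proof -
      obtain f :: "'k mpoly" where f: "f \<in> TC n a" "f \<noteq> 0" "lm f = e i + e j" using quad_in_TC[OF ij] by blast
      obtain g'' where g'': "g'' \<in> G" "mdvd (lm g'') (lm f)" using GB[OF f(1,2)] by blast
      have "g'' \<noteq> 0" using g'' G0 by blast
      then have "lm g'' \<in> ks g''" by (rule lm_in_keys)
      moreover have "g'' \<in> TC n a" using g''(1) GI by blast
      ultimately have "2 \<le> tdeg (lm g'')" using TC_keys_tdeg by blast
      moreover have "tdeg (e i + e j) = 2" by (simp add: tdeg_add tdeg_single)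
      ultimately have "lm g'' = e i + e j" using mdvd_tdeg_eq[of "lm g''" "e i + e j"] g''(2) f(3) by simp
      then show ?thesis using g''(1) by blast
    qed
    have midG: "mid \<nu> \<le> 1" if x: "x \<in> G" and \<nu>: "\<nu> \<in> ks x" and t\<nu>: "3 \<le> tdeg \<nu>" for x \<nu>
    proof (rule mid_le1)
      fix i j assume ij: "1 \<le> i" "i \<le> j" "j + 1 < n"
      obtain g'' where g'': "g'' \<in> G" "lm g'' = e i + e j" using quadG[OF ij] by blast
      show "\<not> mdvd (e i + e j) \<nu>"
      proof
        assume dv: "mdvd (e i + e j) \<nu>"
        show False
        proof (cases "x = g''")
          case True
          have "tdeg \<nu> \<le> tdeg (lm x)" using keys_tdeg_le_lm \<nu> by blast
          then show False using True g''(2) t\<nu> by (simp add: tdeg_add tdeg_single)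
        next
          case False
          then have "g'' \<noteq> x" by simp
          then have "\<not> mdvd (lm g'') \<nu>" using red[OF x g''(1)] \<nu> by blast
          then show False using dv g''(2) by simp
        qed
      qed
    qed
    have mid\<mu>: "mid \<mu> \<le> 1" using midG[OF gG \<mu>k] t3 by simp
    have dpos: "0 < d" using d_pos[OF n2] .
    have keysC: "\<nu> = \<mu>" if x: "x \<in> G" and \<nu>: "\<nu> \<in> ks x" and \<nu>C: "\<nu> \<in> C" for x \<nu>
    proof -
      have S\<nu>: "ks \<nu> \<subseteq> {..<n}" "tdeg \<nu> = D" "wsum a \<nu> = wsum a \<mu>" using \<nu>C unfolding C_def cls_def by auto
      have e1: "wsum a \<nu> = a 0 * D + d * W \<nu>" using wsum_a[OF S\<nu>(1)] S\<nu>(2) by simp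
      have e2: "wsum a \<mu> = a 0 * D + d * W \<mu>" using wsum_a[OF S\<mu>] D_def by simp
      have "d * W \<nu> = d * W \<mu>" using e1 e2 S\<nu>(3) by linarith
      then have WW: "W \<nu> = W \<mu>" using dpos by (simp add: mult_left_cancel)
      have "mid \<nu> \<le> 1" using midG[OF x \<nu>] S\<nu>(2) t3 D_def by simp
      then show "\<nu> = \<mu>" using uniq[OF n2 S\<nu>(1) S\<mu>] S\<nu>(2) D_def WW mid\<mu> by simp
    qed
    have \<mu>C: "\<mu> \<in> C" unfolding C_def cls_def D_def using S\<mu> by simp
    have ksgC: "ks g \<inter> C = {\<mu>}" using keysC[OF gG] \<mu>k \<mu>C by blast
    have lsg: "lsum C g = 1" unfolding lsum_def ksgC using lk\<mu> by simp
    have Wa: "a 0 \<le> W \<mu>"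
    proof (rule ccontr)
      assume "\<not> a 0 \<le> W \<mu>"
      then have "good n a D (wsum a \<mu>)" using good_of_W[OF S\<mu>] D_def by simp
      then have "lsum C g = 0" using TC_vanish gT C_def by blast
      then show False using lsg by simp
    qed
    have dcond: "W \<mu> < a 0 + i" if "i < n" "1 \<le> lk \<mu> i" for i
    proof (rule ccontr)
      assume nlt: "\<not> W \<mu> < a 0 + i"
      define \<mu>' where "\<mu>' = \<mu> - e i"
      have dv: "mdvd (e i) \<mu>" unfolding mdvd_def using that(2) by (simp add: lookup_single when_def)
      have me: "\<mu>' + e i = \<mu>" unfolding \<mu>'_def by (rule mdvd_add[OF dv])
      have S': "ks \<mu>' \<subseteq> {..<n}" using S\<mu> keys_minus_sub[of \<mu> "e i"] unfolding \<mu>'_def by blast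
      have "W \<mu> = W \<mu>' + i" using me wsum_add[of "\<lambda>i. i" \<mu>' "e i"] by (simp add: wsum_single)
      then have "a 0 \<le> W \<mu>'" using nlt by simp
      then have mT: "(sgl \<mu>' 1 :: 'k mpoly) \<in> TC n a" by (rule mono_in_TC[OF n2 S'])
      have "(sgl \<mu>' 1 :: 'k mpoly) \<noteq> 0" by (metis lookup_single_eq lookup_zero one_neq_zero)
      then obtain g'' where g'': "g'' \<in> G" "mdvd (lm g'') (lm (sgl \<mu>' (1::'k)))" using GB[OF mT] by blast
      have dv2: "mdvd (lm g'') \<mu>'" using g''(2) lm_single[of "1::'k" \<mu>'] by simp
      have "tdeg \<mu>' < tdeg \<mu>" using me tdeg_add[of \<mu>' "e i"] by (simp add: tdeg_single)
      then have "tdeg (lm g'') < tdeg \<mu>" using mdvd_tdeg[OF dv2] by simp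
      then have "g'' \<noteq> g" using \<mu>_def by auto
      moreover have "mdvd (lm g'') \<mu>" using mdvd_trans[OF dv2 mdvd_minus[of \<mu> "e i", folded \<mu>'_def]] .
      ultimately show False using red[OF gG g''(1)] \<mu>k by blast
    qed
    have z0: "lk \<mu> 0 = 0"
    proof (rule ccontr)
      assume "lk \<mu> 0 \<noteq> 0"
      then have "W \<mu> < a 0 + 0" using dcond[of 0] n2 by simp
      then show False using Wa by simp
    qed
    obtain i where i: "i < n" "1 \<le> lk \<mu> i" "W \<mu> = i + m * (D - 1)"
      using one_idx[OF n2 S\<mu> mid\<mu> z0] t3 D_def by auto
    have mD: "m * (D - 1) < a 0" using dcond[OF i(1,2)] i(3) by simp
    have "lsum C g = 0"
    proof (rule ideal_gen_lsum_zero[OF _ gI])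
      fix x and \<gamma> :: "nat \<Rightarrow>\<^sub>0 nat" assume x: "x \<in> G - {g}" and \<gamma>S: "ks \<gamma> \<subseteq> {..<n}"
      have xG: "x \<in> G" and xT: "x \<in> TC n a" using x GI by auto
      let ?T = "{\<delta>. \<gamma> + \<delta> \<in> C}"
      show "lsum ?T x = 0"
      proof (cases "ks x \<inter> ?T = {}")
        case True then show ?thesis by (rule lsum_empty)
      next
        case False
        then obtain \<delta>0 where \<delta>0: "\<delta>0 \<in> ks x" "\<gamma> + \<delta>0 \<in> C" by blast
        show ?thesis
        proof (cases "\<gamma> = 0")
          case True
          then have "\<delta>0 = \<mu>" using keysC[OF xG \<delta>0(1)] \<delta>0(2) by simp
          then show ?thesis using notin[OF x] \<delta>0(1) by simp
        next
          case False
          then have "tdeg \<gamma> \<noteq> 0" using tdeg_eq_0 by blast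
          then have t\<gamma>: "1 \<le> tdeg \<gamma>" by simp
          have S0: "ks \<delta>0 \<subseteq> {..<n}" using TC_in_S[OF xT] \<delta>0(1) by (rule in_S_keys)
          have C0: "tdeg \<gamma> + tdeg \<delta>0 = D" "wsum a \<gamma> + wsum a \<delta>0 = wsum a \<mu>"
            using \<delta>0(2) unfolding C_def cls_def by (auto simp: tdeg_add wsum_add)
          have "W \<delta>0 \<le> m * tdeg \<delta>0" using W_le[OF S0] by simp
          also have "\<dots> \<le> m * (D - 1)"
          proof -
            have "tdeg \<delta>0 \<le> D - 1" using C0(1) t\<gamma> by linarith
            then show ?thesis by (rule mult_le_mono2)
          qed
          finally have "W \<delta>0 < a 0" using mD by simp
          then have gd: "good n a (tdeg \<delta>0) (wsum a \<delta>0)" by (rule good_of_W[OF S0])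
          have Teq: "?T = cls n a (tdeg \<delta>0) (wsum a \<delta>0)"
          proof
            show "?T \<subseteq> cls n a (tdeg \<delta>0) (wsum a \<delta>0)"
            proof
              fix \<delta> assume "\<delta> \<in> ?T"
              then have "ks (\<gamma> + \<delta>) \<subseteq> {..<n}" "tdeg \<gamma> + tdeg \<delta> = D" "wsum a \<gamma> + wsum a \<delta> = wsum a \<mu>"
                unfolding C_def cls_def by (auto simp: tdeg_add wsum_add)
              then show "\<delta> \<in> cls n a (tdeg \<delta>0) (wsum a \<delta>0)" unfolding cls_def using C0 by (auto simp: keys_add_nat)
            qed
            show "cls n a (tdeg \<delta>0) (wsum a \<delta>0) \<subseteq> ?T"
            proof
              fix \<delta> assume "\<delta> \<in> cls n a (tdeg \<delta>0) (wsum a \<delta>0)"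
              then have "ks \<delta> \<subseteq> {..<n}" "tdeg \<delta> = tdeg \<delta>0" "wsum a \<delta> = wsum a \<delta>0" unfolding cls_def by auto
              then show "\<delta> \<in> ?T" unfolding C_def cls_def using C0 \<gamma>S by (auto simp: keys_add_nat tdeg_add wsum_add)
            qed
          qed
          show ?thesis unfolding Teq by (rule TC_vanish[OF gd xT])
        qed
      qed
    qed
    then show False using lsg by simp
  qed
qed

end

theorem proposition3p1:
  fixes n d :: nat and a :: "nat \<Rightarrow> nat" and G :: "'k::field mpoly set"
  assumes incr: "\<And>i. Suc i < n \<Longrightarrow> a i < a (Suc i)"
    and arith: "\<And>i. Suc i < n \<Longrightarrow> a (Suc i) = a i + d"
    and numsg: "finite (UNIV - sg_generated (a ` {..<n}))"
    and mingen: "\<And>i. i < n \<Longrightarrow> a i \<notin> sg_generated (a ` {..<n} - {a i})"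
    and rgb: "is_reduced_groebner_basis
                (tangent_cone_ideal n (toric_ideal n a :: 'k mpoly set)) G"
  shows "minimally_generates n G (tangent_cone_ideal n (toric_ideal n a))"
proof -
  interpret asg n d a using incr arith numsg mingen by unfold_locales
  have rgb': "is_groebner_basis (TC n a) G \<and> (\<forall>g\<in>G. lc g = 1 \<and>
        (\<forall>g'\<in>G. g' \<noteq> g \<longrightarrow> (\<forall>\<alpha>\<in>ks g. \<not> mdvd (lm g') \<alpha>)))"
    using rgb unfolding is_reduced_groebner_basis_def by simp
  have gb: "is_groebner_basis (TC n a) G" using rgb' by (rule conjunct1)
  have lc: "\<And>g. g \<in> G \<Longrightarrow> lc g = 1" using conjunct2[OF rgb'] by simp
  have gen: "ideal_gen n G = TC n a" by (rule groebner_generates[OF TC_is_ideal TC_in_S gb lc])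
  show ?thesis unfolding minimally_generates_def
  proof (intro conjI ballI)
    show "ideal_gen n G = TC n a" by (rule gen)
    fix g assume gG: "g \<in> G"
    have "G \<subseteq> TC n a" using gb unfolding is_groebner_basis_def by (elim conjE)
    then have "g \<in> TC n a" using gG by blast
    moreover have "g \<notin> ideal_gen n (G - {g})" by (rule minimal[OF rgb gG])
    ultimately show "ideal_gen n (G - {g}) \<noteq> TC n a" by blast
  qed
qed


end
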